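(* Consider the patient model in the context with actions from an $(r,k)$-exploratory policy. Choose $\tau\in(0,1)$ such that $p_1(\tau):=\mathbf P\big(|w_{t-1}|\geq\frac{\sqrt{1-\tau^2}}{\tau}\frac{1+4\sqrt M}{2\sqrt{2M}}\big)>0$, and let $p:=\min\{p_1(\tau),\frac{r\underline p}{M+1}\}$ where $\underline p:=\sigma(-C_x-\bar\mu)$. Then the process $(z_t)_{t\geq1}$, $z_t:=[x_t\ u_t^\top\ d_t^\top]^\top$, satisfies the $\big(k,\frac{1-\tau^2}{8M}I_{2M+1},p\big)$ block martingale small ball condition with respect to the filtration $\mathcal F^w_t:=\sigma(x_{0:t},u_{0:t},d_{0:t},w_{0:t-1})$.
   Context: Patient model: $M\geq1$ treatments; $\mathcal U:=\{v\in\{0,1\}^M:\|v\|_0\leq1\}$. $x_{t+1}=ax_t+b^\top u_t+c^\top d_t+w_t$, adherence $d^i_t\mid x_t,u^i_t\sim\mathrm{Bernoulli}(u^i_t\sigma(x_t+\mu_i))$, $\sigma$ the sigmoid; $x_1$ distributed as the noise. Parameters $a\in[0,\bar a]$ (known $\bar a\in(0,1)$), $\|b\|_\infty\leq\bar b$, $\|c\|_\infty\leq\bar c$, $\mu\in[-\bar\mu,\bar\mu]^M$. $x_t,u_t,d_t$ fully observed. Noise $w_t$ i.i.d., zero-symmetric, $\sigma_s^2$-subgaussian, $|w_t|\leq\bar w$ ($\bar w>0$), log-concave density, known variance $\sigma_w^2>0$. $C_x:=\frac{\bar b+\bar c+\bar w}{1-\bar a}$. Conventions $x_0=0$, $u_0=d_0=\mathbf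 0_M$, $w_0\sim w$; $\mathcal F_t:=\sigma(x_{0:t},u_{0:t},d_{0:t},w_{0:t})$. An $(r,k)$-exploratory policy ($r\in(0,1]$, $k\in\mathbb N$): in every block $\{j+1,\dots,j+k\}$, $j\geq0$, almost surely at least $\lceil rk\rceil$ actions are drawn uniformly from $\mathcal U$ independently of $\mathcal F_{t-1}$ (which steps are exploratory may depend on history). Block martingale small ball (BMSB): an $\{\mathcal G_t\}$-adapted process $(Z_t)$ in $\mathbb R^d$ satisfies the $(k,\Gamma,p)$-BMSB condition ($k$ a positive integer, $\Gamma\succ0$, $0\leq p\leq1$) if for every fixed $\lambda\in\mathbb R^d$ with $\|\lambda\|_2=1$ and every $j\geq0$, $\frac1k\sum_{i=1}^k\mathbf P(|\lambda^\top Z_{j+i}|\geq\sqrt{\lambda^\top\Gamma\lambda}\mid\mathcal G_j)\geq p$ almost surely. *)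

theory Defs
  imports "HOL-Probability.Probability"
begin

definition sigmoid :: "real \<Rightarrow> real" where
  "sigmoid y = 1 / (1 + exp (- y))"

text \<open>Action set: 0/1 vectors with at most one nonzero entry (M = CARD('m)).\<close>
definition actions :: "(real ^ 'm) set" where
  "actions = {v. (\<forall>i. v $ i \<in> {0, 1}) \<and> card {i. v $ i \<noteq> 0} \<le> 1}"

definition rv_events :: "'a measure \<Rightarrow> ('a \<Rightarrow> 'b::topological_space) \<Rightarrow> 'a set set" where
  "rv_events M f = {f -` B \<inter> space M | B. B \<in> sets borel}"

definition filtF :: "'a measure \<Rightarrow> (nat \<Rightarrow> 'a \<Rightarrow> real) \<Rightarrow> (nat \<Rightarrow> 'a \<Rightarrow> real ^ 'm)
    \<Rightarrow> (nat \<Rightarrow> 'a \<Rightarrow> real ^ 'm) \<Rightarrow> (nat \<Rightarrow> 'a \<Rightarrow> real) \<Rightarrow> nat \<Rightarrow> 'a measure" where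
  "filtF M x u d w t = sigma (space M)
     (\<Union>s\<in>{..t}. rv_events M (x s) \<union> rv_events M (u s) \<union> rv_events M (d s) \<union> rv_events M (w s))"

definition filtFw :: "'a measure \<Rightarrow> (nat \<Rightarrow> 'a \<Rightarrow> real) \<Rightarrow> (nat \<Rightarrow> 'a \<Rightarrow> real ^ 'm)
    \<Rightarrow> (nat \<Rightarrow> 'a \<Rightarrow> real ^ 'm) \<Rightarrow> (nat \<Rightarrow> 'a \<Rightarrow> real) \<Rightarrow> nat \<Rightarrow> 'a measure" where
  "filtFw M x u d w t = sigma (space M)
     ((\<Union>s\<in>{..t}. rv_events M (x s) \<union> rv_events M (u s) \<union> rv_events M (d s))
      \<union> (\<Union>s\<in>{..<t}. rv_events M (w s)))"

text \<open>History just before adherence is realised at time t: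
  sigma(x_{0:t}, u_{0:t}, d_{0:t-1}, w_{0:t-1}).\<close>
definition filtH :: "'a measure \<Rightarrow> (nat \<Rightarrow> 'a \<Rightarrow> real) \<Rightarrow> (nat \<Rightarrow> 'a \<Rightarrow> real ^ 'm)
    \<Rightarrow> (nat \<Rightarrow> 'a \<Rightarrow> real ^ 'm) \<Rightarrow> (nat \<Rightarrow> 'a \<Rightarrow> real) \<Rightarrow> nat \<Rightarrow> 'a measure" where
  "filtH M x u d w t = sigma (space M)
     ((\<Union>s\<in>{..t}. rv_events M (x s) \<union> rv_events M (u s))
      \<union> (\<Union>s\<in>{..<t}. rv_events M (d s) \<union> rv_events M (w s)))"

text \<open>Block martingale small ball condition (k, Gamma, p) for a G-adapted process Z;
  Gamma is a symmetric positive definite linear operator; conditional probabilities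
  are conditional expectations of indicators.\<close>
definition BMSB :: "'a measure \<Rightarrow> (nat \<Rightarrow> 'a measure) \<Rightarrow> (nat \<Rightarrow> 'a \<Rightarrow> 'd::euclidean_space)
    \<Rightarrow> nat \<Rightarrow> ('d \<Rightarrow> 'd) \<Rightarrow> real \<Rightarrow> bool" where
  "BMSB M G Z k \<Gamma> p \<longleftrightarrow>
     k > 0 \<and> linear \<Gamma> \<and> (\<forall>v w. v \<bullet> \<Gamma> w = \<Gamma> v \<bullet> w) \<and> (\<forall>v. v \<noteq> 0 \<longrightarrow> v \<bullet> \<Gamma> v > 0)
     \<and> 0 \<le> p \<and> p \<le> 1
     \<and> (\<forall>t. subalgebra M (G t)) \<and> (\<forall>s t. s \<le> t \<longrightarrow> sets (G s) \<subseteq> sets (G t))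
     \<and> (\<forall>t. Z t \<in> borel_measurable (G t))
     \<and> (\<forall>l j. norm l = 1 \<longrightarrow>
          (AE \<omega> in M. (1 / real k) * (\<Sum>i=1..k. real_cond_exp M (G j)
              (indicator {\<omega>'\<in>space M. \<bar>l \<bullet> Z (j + i) \<omega>'\<bar> \<ge> sqrt (l \<bullet> \<Gamma> l)}) \<omega>) \<ge> p))"

definition noise_law :: "real measure \<Rightarrow> real \<Rightarrow> real \<Rightarrow> real \<Rightarrow> bool" where
  "noise_law W wbar sig_s sig_w \<longleftrightarrow>
     prob_space W \<and> sets W = sets borel
     \<and> distr W borel uminus = W
     \<and> (\<forall>s. integrable W (\<lambda>y. exp (s * y)) \<and> (\<integral>y. exp (s * y) \<partial>W) \<le> exp (sig_s\<^sup>2 * s\<^sup>2 / 2))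
     \<and> (AE y in W. \<bar>y\<bar> \<le> wbar)
     \<and> (\<exists>f. f \<in> borel_measurable borel \<and> (\<forall>y. f y \<ge> 0) \<and> W = density lborel (\<lambda>y. ennreal (f y))
          \<and> (\<forall>y z \<theta>. 0 \<le> \<theta> \<and> \<theta> \<le> 1 \<longrightarrow>
               f ((1 - \<theta>) * y + \<theta> * z) \<ge> f y powr (1 - \<theta>) * f z powr \<theta>))
     \<and> sig_w > 0 \<and> integrable W (\<lambda>y. y\<^sup>2) \<and> (\<integral>y. y\<^sup>2 \<partial>W) = sig_w\<^sup>2"

end

theory Submission
  imports Defs
begin

lemma logconc_mono:
  fixes f :: "real \<Rightarrow> real"
  assumes f0: "\<And>y. f y \<ge> 0"
    and lc: "\<And>y z \<theta>. 0 \<le> \<theta> \<and> \<theta> \<le> 1 \<longrightarrow> f ((1 - \<theta>) * y + \<theta> * z) \<ge> f y powr (1 - \<theta>) * f z powr \<theta>"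
    and sym: "f (- y) = f y" and y: "y < 0" and h: "0 \<le> h" "h \<le> - 2 * y"
  shows "f y \<le> f (y + h)"
proof -
  define \<theta> where "\<theta> = h / (- 2 * y)"
  have th: "0 \<le> \<theta>" "\<theta> \<le> 1" using y h by (auto simp: \<theta>_def divide_simps)
  have eq: "(1 - \<theta>) * y + \<theta> * (- y) = y + h" using y by (simp add: \<theta>_def field_simps)
  have "f y powr (1 - \<theta>) * f (-y) powr \<theta> \<le> f (y + h)" using lc[of \<theta> y "-y"] th eq by simp
  moreover have "f y powr (1 - \<theta>) * f (-y) powr \<theta> = f y"
  proof (cases "f y = 0")
    case True then show ?thesis using sym by simp
  next
    case False then have "f y > 0" using f0[of y] by simp
    then show ?thesis using sym by (simp add: powr_add[symmetric])
  qed
  ultimately show ?thesis by simp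
qed

lemma anderson_core:
  fixes f :: "real \<Rightarrow> real"
  assumes fm: "f \<in> borel_measurable borel" and f0: "\<And>y. f y \<ge> 0"
    and lc: "\<And>y z \<theta>. 0 \<le> \<theta> \<and> \<theta> \<le> 1 \<longrightarrow> f ((1 - \<theta>) * y + \<theta> * z) \<ge> f y powr (1 - \<theta>) * f z powr \<theta>"
    and sym: "AE y in lborel. f (- y) = f y" and c: "0 \<le> c" and T: "0 < T"
  shows "(\<integral>\<^sup>+y. ennreal (f y) * indicator {y. \<bar>c + y\<bar> < T} y \<partial>lborel)
       \<le> (\<integral>\<^sup>+y. ennreal (f y) * indicator {y. \<bar>y\<bar> < T} y \<partial>lborel)"
proof -
  define A where "A = {y::real. \<bar>c + y\<bar> < T}"
  define B where "B = {y::real. \<bar>y\<bar> < T}"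
  define h where "h = max c (2 * T)"
  have [measurable]: "A \<in> sets borel" "B \<in> sets borel" unfolding A_def B_def by measurable
  have "(\<integral>\<^sup>+y. ennreal (f y) * indicator A y \<partial>lborel)
     = (\<integral>\<^sup>+y. ennreal (f y) * indicator (A \<inter> B) y + ennreal (f y) * indicator (A - B) y \<partial>lborel)"
    by (intro nn_integral_cong) (auto simp: indicator_def)
  also have "\<dots> = (\<integral>\<^sup>+y. ennreal (f y) * indicator (A \<inter> B) y \<partial>lborel) + (\<integral>\<^sup>+y. ennreal (f y) * indicator (A - B) y \<partial>lborel)"
    using fm by (intro nn_integral_add) auto
  also have "(\<integral>\<^sup>+y. ennreal (f y) * indicator (A - B) y \<partial>lborel) \<le> (\<integral>\<^sup>+y. ennreal (f (h + y)) * indicator (A - B) y \<partial>lborel)"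
  proof (rule nn_integral_mono_AE)
    show "AE y in lborel. ennreal (f y) * indicator (A - B) y \<le> ennreal (f (h + y)) * indicator (A - B) y"
      using sym
    proof eventually_elim
      case (elim y)
      show ?case
      proof (cases "y \<in> A - B")
        case True
        then have "y < 0" "0 \<le> h" "h \<le> - 2 * y" using c T by (auto simp: A_def B_def h_def)
        then have "f y \<le> f (y + h)" using logconc_mono[OF f0 lc elim] by blast
        then show ?thesis using True by (simp add: add.commute ennreal_leI)
      qed simp
    qed
  qed
  also have "(\<integral>\<^sup>+y. ennreal (f (h + y)) * indicator (A - B) y \<partial>lborel)
      = (\<integral>\<^sup>+z. ennreal (f z) * indicator (A - B) (z - h) \<partial>lborel)"
    using nn_integral_real_affine[of "\<lambda>z. ennreal (f z) * indicator (A - B) (z - h)" 1 h] fm by simp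
  also have "\<dots> \<le> (\<integral>\<^sup>+z. ennreal (f z) * indicator (B - A) z \<partial>lborel)"
  proof (rule nn_integral_mono_AE)
    show "AE z in lborel. ennreal (f z) * indicator (A - B) (z - h) \<le> ennreal (f z) * indicator (B - A) z"
      using AE_lborel_singleton[of T]
    proof eventually_elim
      case (elim z)
      show ?case
      proof (cases "z - h \<in> A - B")
        case True
        then have "z \<in> B - A" using c T elim by (auto simp: A_def B_def h_def split: if_splits)
        then show ?thesis using True by simp
      qed simp
    qed
  qed
  finally have "(\<integral>\<^sup>+y. ennreal (f y) * indicator A y \<partial>lborel) \<le>
     (\<integral>\<^sup>+y. ennreal (f y) * indicator (A \<inter> B) y \<partial>lborel) + (\<integral>\<^sup>+z. ennreal (f z) * indicator (B - A) z \<partial>lborel)"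
    by (simp add: add_left_mono)
  also have "\<dots> = (\<integral>\<^sup>+y. ennreal (f y) * indicator (A \<inter> B) y + ennreal (f y) * indicator (B - A) y \<partial>lborel)"
    using fm by (intro nn_integral_add[symmetric]) auto
  also have "\<dots> = (\<integral>\<^sup>+y. ennreal (f y) * indicator B y \<partial>lborel)"
    by (intro nn_integral_cong) (auto simp: indicator_def)
  finally show ?thesis unfolding A_def B_def .
qed

lemma anderson:
  assumes noise: "noise_law W wbar sig_s sig_w"
  shows "measure W {y. T \<le> \<bar>y\<bar>} \<le> measure W {y. T \<le> \<bar>c + y\<bar>}"
proof -
  from noise obtain f where fm: "f \<in> borel_measurable borel" and f0: "\<And>y. f y \<ge> 0"
    and Wd: "W = density lborel (\<lambda>y. ennreal (f y))"
    and lc: "\<And>y z \<theta>. 0 \<le> \<theta> \<and> \<theta> \<le> 1 \<longrightarrow> f ((1 - \<theta>) * y + \<theta> * z) \<ge> f y powr (1 - \<theta>) * f z powr \<theta>"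
    and Wp: "prob_space W" and Wsym: "distr W borel uminus = W"
    unfolding noise_law_def by blast
  interpret W: prob_space W by (rule Wp)
  have spW: "space W = UNIV" using Wd by simp
  have setsW: "sets W = sets borel" using Wd by simp
  have um0: "(uminus::real\<Rightarrow>real) \<in> borel \<rightarrow>\<^sub>M borel" by measurable
  have um: "(uminus::real\<Rightarrow>real) \<in> W \<rightarrow>\<^sub>M borel"
  proof -
    have "(uminus::real\<Rightarrow>real) \<in> borel \<rightarrow>\<^sub>M borel" by measurable
    then show ?thesis using measurable_cong_sets[OF setsW refl, of borel] by blast
  qed
  have Wflip: "measure W S = measure W (uminus -` S)" if "S \<in> sets borel" for S
  proof -
    have "measure W S = measure (distr W borel uminus) S" using Wsym by simp
    also have "\<dots> = measure W (uminus -` S \<inter> space W)"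
      using that um by (intro measure_distr) (auto simp: setsW)
    finally show ?thesis by (simp add: spW)
  qed
  have sym: "AE y in lborel. f (- y) = f y"
  proof -
    have "density lborel (\<lambda>y. ennreal (f y)) = density lborel (\<lambda>y. ennreal (f (- y)))"
    proof (rule measure_eqI)
      fix S assume S: "S \<in> sets (density lborel (\<lambda>y. ennreal (f y)))"
      then have S': "S \<in> sets borel" by simp
      have "emeasure (density lborel (\<lambda>y. ennreal (f y))) S = emeasure W S" using Wd by simp
      also have "\<dots> = emeasure (distr W borel uminus) S" using Wsym by simp
      also have "\<dots> = emeasure W (uminus -` S)" using S' um by (subst emeasure_distr) (auto simp: setsW spW)
      also have "\<dots> = (\<integral>\<^sup>+y. ennreal (f y) * indicator (uminus -` S) y \<partial>lborel)"
        using S' Wd measurable_sets[OF um0 S'] fm by (simp add: emeasure_density)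
      also have "\<dots> = (\<integral>\<^sup>+y. ennreal (f (- y)) * indicator (uminus -` S) (- y) \<partial>lborel)"
        using nn_integral_real_affine[of "\<lambda>y. ennreal (f y) * indicator (uminus -` S) y" "-1" 0] fm S' by simp
      also have "\<dots> = emeasure (density lborel (\<lambda>y. ennreal (f (- y)))) S"
        using S' fm by (simp add: emeasure_density indicator_def mult.commute)
      finally show "emeasure (density lborel (\<lambda>y. ennreal (f y))) S = emeasure (density lborel (\<lambda>y. ennreal (f (- y)))) S" .
    qed simp
    then have "AE y in lborel. ennreal (f y) = ennreal (f (- y))"
      using fm by (subst (asm) sigma_finite_measure.density_unique_iff[OF sigma_finite_lborel]) auto
    then show ?thesis by eventually_elim (use f0 in simp)
  qed
  have main: "measure W {y. T \<le> \<bar>y\<bar>} \<le> measure W {y. T \<le> \<bar>c + y\<bar>}" if c: "0 \<le> c" for c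
  proof (cases "T \<le> 0")
    case True
    then have "{y. T \<le> \<bar>y\<bar>} = UNIV" "{y. T \<le> \<bar>c + y\<bar>} = UNIV" by auto
    then show ?thesis by simp
  next
    case False
    then have T: "0 < T" by simp
    have m1: "{y::real. \<bar>c + y\<bar> < T} \<in> sets borel" "{y::real. \<bar>y\<bar> < T} \<in> sets borel"
      by (intro borel_open open_Collect_less continuous_intros)+
    have "emeasure W {y. \<bar>c + y\<bar> < T} = (\<integral>\<^sup>+y. ennreal (f y) * indicator {y. \<bar>c + y\<bar> < T} y \<partial>lborel)"
      using Wd m1 fm by (simp add: emeasure_density)
    also have "\<dots> \<le> (\<integral>\<^sup>+y. ennreal (f y) * indicator {y. \<bar>y\<bar> < T} y \<partial>lborel)"
      by (rule anderson_core[OF fm f0 lc sym c T])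
    also have "\<dots> = emeasure W {y. \<bar>y\<bar> < T}"
      using Wd m1 fm by (simp add: emeasure_density)
    finally have "ennreal (measure W {y. \<bar>c + y\<bar> < T}) \<le> ennreal (measure W {y. \<bar>y\<bar> < T})"
      by (simp add: W.emeasure_eq_measure)
    then have le: "measure W {y. \<bar>c + y\<bar> < T} \<le> measure W {y. \<bar>y\<bar> < T}"
      by (simp add: ennreal_le_iff)
    have e1: "UNIV - {y. \<bar>c + y\<bar> < T} = {y. T \<le> \<bar>c + y\<bar>}" by auto
    have e2: "UNIV - {y. \<bar>y\<bar> < T} = {y. T \<le> \<bar>y\<bar>}" by auto
    have "measure W {y. T \<le> \<bar>c + y\<bar>} = 1 - measure W {y. \<bar>c + y\<bar> < T}"
      using W.prob_compl[of "{y. \<bar>c + y\<bar> < T}"] m1 unfolding setsW spW e1 by simp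
    moreover have "measure W {y. T \<le> \<bar>y\<bar>} = 1 - measure W {y. \<bar>y\<bar> < T}"
      using W.prob_compl[of "{y. \<bar>y\<bar> < T}"] m1 unfolding setsW spW e2 by simp
    ultimately show ?thesis using le by simp
  qed
  show ?thesis
  proof (cases "0 \<le> c")
    case True then show ?thesis using main by blast
  next
    case False
    have m2: "{y::real. T \<le> \<bar>- c + y\<bar>} \<in> sets borel"
      by (intro borel_closed closed_Collect_le continuous_intros)
    have "measure W {y. T \<le> \<bar>- c + y\<bar>} = measure W (uminus -` {y. T \<le> \<bar>- c + y\<bar>})"
      by (rule Wflip[OF m2])
    also have "uminus -` {y. T \<le> \<bar>- c + y\<bar>} = {y. T \<le> \<bar>c + y\<bar>}" by auto
    finally show ?thesis using main[of "-c"] False by simp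
  qed
qed

lemma fst_borel_rr[measurable]: "(fst :: real \<times> real \<Rightarrow> real) \<in> borel_measurable borel"
  by (intro borel_measurable_continuous_onI continuous_intros)
lemma snd_borel_rr[measurable]: "(snd :: real \<times> real \<Rightarrow> real) \<in> borel_measurable borel"
  by (intro borel_measurable_continuous_onI continuous_intros)

lemma indep_lower:
  fixes X Y :: "'a \<Rightarrow> real"
  assumes P: "prob_space M" and G: "subalgebra M G"
    and A: "A \<in> sets G" and X: "X \<in> borel_measurable G" and Y: "Y \<in> borel_measurable M"
    and ind: "\<forall>A'\<in>sets G. \<forall>B\<in>sets borel. measure M (A' \<inter> (Y -` B \<inter> space M)) = measure M A' * measure M (Y -` B \<inter> space M)"
    and q: "\<forall>c. q \<le> measure M {\<omega>\<in>space M. T \<le> \<bar>c + Y \<omega>\<bar>}"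
  shows "q * measure M A \<le> measure M (A \<inter> {\<omega>\<in>space M. T \<le> \<bar>X \<omega> + Y \<omega>\<bar>})"
proof (cases "q \<ge> 0")
  case False
  then have "q * measure M A \<le> 0" by (simp add: mult_nonpos_nonneg)
  then show ?thesis by (meson measure_nonneg order_trans)
next
  case q0: True
  interpret prob_space M by (rule P)
  have sG: "sets G \<subseteq> sets M" and spG: "space G = space M" using G by (auto simp: subalgebra_def)
  have AM: "A \<in> sets M" using A sG by auto
  have XM: "X \<in> borel_measurable M" using X G by (rule measurable_from_subalg[rotated])
  define V where "V = (\<lambda>\<omega>. (indicator A \<omega> :: real, X \<omega>))"
  have VG: "V \<in> borel_measurable G" unfolding V_def using A X by measurable
  have VM: "V \<in> borel_measurable M" unfolding V_def using AM XM by measurable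
  define Y' where "Y' = (\<lambda>\<omega>. (Y \<omega>, 0::real))"
  have Y'M: "Y' \<in> borel_measurable M" unfolding Y'_def using Y by measurable
  define YS where "YS = {Y' -` B \<inter> space M | B. B \<in> sets (borel :: (real \<times> real) measure)}"
  have YS_eq: "Y' -` B \<inter> space M = Y -` ((\<lambda>y. (y, 0::real)) -` B) \<inter> space M" for B
    by (auto simp: Y'_def)
  have emb: "(\<lambda>y::real. (y, 0::real)) -` B \<in> sets borel" if "B \<in> sets borel" for B
  proof -
    have "(\<lambda>y::real. (y, 0::real)) \<in> borel \<rightarrow>\<^sub>M borel" by measurable
    from measurable_sets[OF this that] show ?thesis by simp
  qed
  have i1: "indep_set (sets G) YS"
  proof (rule indep_setI)
    show "sets G \<subseteq> events" using sG by simp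
    show "YS \<subseteq> events" unfolding YS_def using Y'M by auto
    fix a b assume "a \<in> sets G" "b \<in> YS"
    then show "prob (a \<inter> b) = prob a * prob b" using ind emb unfolding YS_def YS_eq by auto
  qed
  have st1: "Int_stable (sets G)" by (auto simp: Int_stable_def)
  have st2: "Int_stable YS" unfolding Int_stable_def YS_def
  proof (intro ballI)
    fix a b assume "a \<in> {Y' -` B \<inter> space M |B. B \<in> sets (borel :: (real \<times> real) measure)}" "b \<in> {Y' -` B \<inter> space M |B. B \<in> sets (borel :: (real \<times> real) measure)}"
    then obtain B1 B2 where "a = Y' -` B1 \<inter> space M" "b = Y' -` B2 \<inter> space M" "B1 \<in> sets (borel :: (real \<times> real) measure)" "B2 \<in> sets (borel :: (real \<times> real) measure)" by auto
    then show "a \<inter> b \<in> {Y' -` B \<inter> space M |B. B \<in> sets (borel :: (real \<times> real) measure)}" by (intro CollectI exI[of _ "B1 \<inter> B2"]) auto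
  qed
  have i2: "indep_set (sigma_sets (space M) (sets G)) (sigma_sets (space M) YS)"
    by (rule indep_set_sigma_sets[OF i1 st1 st2])
  have "sigma_sets (space M) (sets G) = sets G" using sets.sigma_sets_eq[of G] spG by simp
  then have i3: "indep_set (sets G) (sigma_sets (space M) YS)" using i2 by simp
  have sub: "sigma_sets (space M) {V -` S \<inter> space M | S. S \<in> sets (borel :: (real \<times> real) measure)} \<subseteq> sets G"
  proof (rule sets.sigma_sets_subset'[of _ G, simplified spG])
    show "{V -` S \<inter> space M |S. S \<in> sets borel} \<subseteq> sets G"
      using VG spG by (auto simp: measurable_def)
  qed (simp add: spG[symmetric])
  have i4: "indep_set (sigma_sets (space M) {V -` S \<inter> space M | S. S \<in> sets (borel :: (real \<times> real) measure)}) (sigma_sets (space M) YS)"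
    unfolding indep_set_def
    by (rule indep_sets_mono_sets[OF i3[unfolded indep_set_def]]) (use sub in \<open>auto split: bool.split\<close>)
  have iv: "indep_var borel V borel Y'"
    unfolding indep_var_eq using VM Y'M i4 by (simp add: YS_def)
  then have deq: "distr M borel V \<Otimes>\<^sub>M distr M borel Y' = distr M (borel \<Otimes>\<^sub>M borel) (\<lambda>\<omega>. (V \<omega>, Y' \<omega>))"
    using indep_var_distribution_eq by blast
  define S where "S = {p :: (real \<times> real) \<times> (real \<times> real). fst (fst p) = 1 \<and> T \<le> \<bar>snd (fst p) + fst (snd p)\<bar>}"
  have SM: "S \<in> sets (borel \<Otimes>\<^sub>M borel)"
  proof -
    have "{p \<in> space ((borel \<Otimes>\<^sub>M borel) \<Otimes>\<^sub>M (borel \<Otimes>\<^sub>M borel)). fst (fst p) = (1::real) \<and> T \<le> \<bar>snd (fst p) + fst (snd p :: real \<times> real)\<bar>} \<in> sets ((borel \<Otimes>\<^sub>M borel) \<Otimes>\<^sub>M (borel \<Otimes>\<^sub>M (borel :: real measure)))"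
      by measurable
    then have "{p \<in> space (borel \<Otimes>\<^sub>M borel). fst (fst p) = (1::real) \<and> T \<le> \<bar>snd (fst p) + fst (snd p :: real \<times> real)\<bar>} \<in> sets (borel \<Otimes>\<^sub>M (borel :: (real \<times> real) measure))"
      by (simp only: borel_prod)
    then show ?thesis unfolding S_def by (simp add: space_pair_measure)
  qed
  have pre: "(\<lambda>\<omega>. (V \<omega>, Y' \<omega>)) -` S \<inter> space M = A \<inter> {\<omega>\<in>space M. T \<le> \<bar>X \<omega> + Y \<omega>\<bar>}"
    using AM sets.sets_into_space by (auto simp: S_def V_def Y'_def indicator_def)
  have VYM: "(\<lambda>\<omega>. (V \<omega>, Y' \<omega>)) \<in> M \<rightarrow>\<^sub>M borel \<Otimes>\<^sub>M borel" using VM Y'M by measurable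
  interpret N2: prob_space "distr M borel Y'" using Y'M by (rule prob_space_distr)
  have "emeasure M (A \<inter> {\<omega>\<in>space M. T \<le> \<bar>X \<omega> + Y \<omega>\<bar>}) = emeasure (distr M (borel \<Otimes>\<^sub>M borel) (\<lambda>\<omega>. (V \<omega>, Y' \<omega>))) S"
    using SM VYM by (subst emeasure_distr) (auto simp: pre)
  also have "\<dots> = emeasure (distr M borel V \<Otimes>\<^sub>M distr M borel Y') S" using deq by simp
  also have "\<dots> = (\<integral>\<^sup>+v. emeasure (distr M borel Y') (Pair v -` S) \<partial>distr M borel V)"
    using SM by (intro N2.emeasure_pair_measure_alt) simp
  also have "\<dots> \<ge> (\<integral>\<^sup>+v. ennreal q * indicator {v. fst v = 1} v \<partial>distr M borel V)"
  proof (rule nn_integral_mono)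
    fix v :: "real \<times> real"
    show "ennreal q * indicator {v. fst v = 1} v \<le> emeasure (distr M borel Y') (Pair v -` S)"
    proof (cases "fst v = 1")
      case True
      have "Pair v -` S = {y. T \<le> \<bar>snd v + fst y\<bar>}" using True by (auto simp: S_def)
      moreover have "{y::real\<times>real. T \<le> \<bar>snd v + fst y\<bar>} \<in> sets borel" by measurable
      ultimately have "emeasure (distr M borel Y') (Pair v -` S) = emeasure M (Y' -` {y. T \<le> \<bar>snd v + fst y\<bar>} \<inter> space M)"
        using Y'M by (simp add: emeasure_distr)
      also have "\<dots> = ennreal (measure M {\<omega>\<in>space M. T \<le> \<bar>snd v + Y \<omega>\<bar>})"
        by (simp add: emeasure_eq_measure vimage_def Int_def conj_commute Y'_def)
      also have "\<dots> \<ge> ennreal q" using q by (simp add: ennreal_leI)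
      finally show ?thesis using True by simp
    qed simp
  qed
  also have "(\<integral>\<^sup>+v. ennreal q * indicator {v. fst v = 1} v \<partial>distr M borel V) = ennreal q * emeasure (distr M borel V) {v. fst v = 1}"
    by (rule nn_integral_cmult_indicator) measurable
  also have "emeasure (distr M borel V) {v. fst v = 1} = emeasure M A"
  proof -
    have "{v::real \<times> real. fst v = 1} \<in> sets borel" by measurable
    then have "emeasure (distr M borel V) {v. fst v = 1} = emeasure M (V -` {v. fst v = 1} \<inter> space M)"
      using VM by (simp add: emeasure_distr)
    also have "V -` {v. fst v = 1} \<inter> space M = A" using AM sets.sets_into_space by (auto simp: V_def indicator_def)
    finally show ?thesis .
  qed
  finally have "ennreal (q * measure M A) \<le> ennreal (measure M (A \<inter> {\<omega>\<in>space M. T \<le> \<bar>X \<omega> + Y \<omega>\<bar>}))"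
    using q0 by (simp add: emeasure_eq_measure ennreal_mult)
  then show ?thesis by (simp add: ennreal_le_iff)
qed

lemma condexp_sum_lb:
  assumes P: "prob_space M" and G: "subalgebra M G" and fin: "finite I"
    and E: "\<And>i. i \<in> I \<Longrightarrow> E i \<in> sets M"
    and lb: "\<And>A. A \<in> sets G \<Longrightarrow> c * measure M A \<le> (\<Sum>i\<in>I. measure M (A \<inter> E i))"
  shows "AE \<omega> in M. c \<le> (\<Sum>i\<in>I. real_cond_exp M G (indicator (E i)) \<omega>)"
proof -
  interpret prob_space M by (rule P)
  interpret sigma_finite_subalgebra M G
    by (rule finite_measure_subalgebra_is_sigma_finite) (unfold_locales, rule G)
  have sG: "sets G \<subseteq> sets M" and spG: "space G = space M" using G by (auto simp: subalgebra_def)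
  define h where "h = (\<lambda>\<omega>. \<Sum>i\<in>I. real_cond_exp M G (indicator (E i)) \<omega>)"
  have intE: "integrable M (indicator (E i) :: 'a \<Rightarrow> real)" if "i \<in> I" for i
    by (intro integrable_real_indicator E[OF that]) (simp add: less_top[symmetric])
  have hG: "h \<in> borel_measurable G" unfolding h_def by measurable
  have hM: "h \<in> borel_measurable M" using hG G by (rule measurable_from_subalg[rotated])
  have inth: "integrable M h" unfolding h_def
    by (rule Bochner_Integration.integrable_sum) (auto intro: real_cond_exp_int(1) intE)
  have key: "(\<integral>\<omega>. indicator A \<omega> * h \<omega> \<partial>M) = (\<Sum>i\<in>I. measure M (A \<inter> E i))" if A: "A \<in> sets G" for A
  proof -
    have AM: "A \<in> sets M" using A sG by auto
    have "(\<integral>\<omega>. indicator A \<omega> * h \<omega> \<partial>M) = (\<Sum>i\<in>I. \<integral>\<omega>. indicator A \<omega> * real_cond_exp M G (indicator (E i)) \<omega> \<partial>M)"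
      unfolding h_def sum_distrib_left
      by (rule Bochner_Integration.integral_sum) (use integrable_mult_indicator[OF AM real_cond_exp_int(1)[OF intE]] in simp)
    also have "\<dots> = (\<Sum>i\<in>I. \<integral>\<omega>. indicator A \<omega> * indicator (E i) \<omega> \<partial>M)"
    proof (intro sum.cong refl)
      fix i assume i: "i \<in> I"
      show "(\<integral>\<omega>. indicator A \<omega> * real_cond_exp M G (indicator (E i)) \<omega> \<partial>M) = (\<integral>\<omega>. indicator A \<omega> * indicator (E i) \<omega> \<partial>M)"
        using real_cond_exp_intA[OF intE[OF i] A] unfolding set_lebesgue_integral_def by simp
    qed
    also have "\<dots> = (\<Sum>i\<in>I. measure M (A \<inter> E i))"
    proof (intro sum.cong refl)
      fix i assume i: "i \<in> I"
      have "(\<integral>\<omega>. indicator A \<omega> * indicator (E i) \<omega> \<partial>M) = (\<integral>\<omega>. (indicator (A \<inter> E i) \<omega> :: real) \<partial>M)"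
        by (intro Bochner_Integration.integral_cong) (auto simp: indicator_def)
      also have "\<dots> = measure M (A \<inter> E i)" using AM E[OF i] by (simp add: Int_absorb2 sets.sets_into_space Int_assoc)
      finally show "(\<integral>\<omega>. indicator A \<omega> * indicator (E i) \<omega> \<partial>M) = measure M (A \<inter> E i)" .
    qed
    finally show ?thesis .
  qed
  define B where "B = {\<omega>\<in>space M. h \<omega> < c}"
  have BG: "B \<in> sets G" unfolding B_def using hG spG by measurable (metis sets.top spG)
  have BM: "B \<in> sets M" using BG sG by auto
  define g where "g = (\<lambda>\<omega>. indicator B \<omega> * (c - h \<omega>))"
  have intg: "integrable M g" unfolding g_def
    using integrable_mult_indicator[OF BM Bochner_Integration.integrable_diff[OF integrable_const[of c] inth]] by simp
  have g0: "AE \<omega> in M. 0 \<le> g \<omega>" by (auto simp: g_def B_def indicator_def)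
  have "integral\<^sup>L M g = c * measure M B - (\<integral>\<omega>. indicator B \<omega> * h \<omega> \<partial>M)"
  proof -
    have "integral\<^sup>L M g = (\<integral>\<omega>. c * indicator B \<omega> - indicator B \<omega> * h \<omega> \<partial>M)"
      unfolding g_def by (intro Bochner_Integration.integral_cong) (auto simp: algebra_simps)
    also have "\<dots> = (\<integral>\<omega>. c * indicator B \<omega> \<partial>M) - (\<integral>\<omega>. indicator B \<omega> * h \<omega> \<partial>M)"
      using BM inth integrable_mult_indicator[OF BM inth] by (intro Bochner_Integration.integral_diff) (auto simp: less_top[symmetric])
    also have "(\<integral>\<omega>. c * indicator B \<omega> \<partial>M) = c * measure M B"
      using BM by simp
    finally show ?thesis .
  qed
  also have "\<dots> \<le> 0" using key[OF BG] lb[OF BG] by simp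
  finally have "integral\<^sup>L M g \<le> 0" .
  moreover have "integral\<^sup>L M g \<ge> 0" using g0 by (intro integral_nonneg_AE) auto
  ultimately have "integral\<^sup>L M g = 0" by simp
  then have "AE \<omega> in M. g \<omega> = 0" using integral_nonneg_eq_0_iff_AE[OF intg g0] by simp
  from this AE_space show ?thesis
  proof eventually_elim
    case (elim \<omega>)
    show ?case
    proof (rule ccontr)
      assume "\<not> c \<le> (\<Sum>i\<in>I. real_cond_exp M G (indicator (E i)) \<omega>)"
      then have "h \<omega> < c" by (simp add: h_def)
      moreover have "\<omega> \<in> space M" using elim by simp
      ultimately show False using elim by (simp add: g_def B_def)
    qed
  qed
qed

lemma actions_cases:
  fixes v :: "real ^ 'm"
  assumes "v \<in> actions"
  shows "v = 0 \<or> (\<exists>i. v = axis i 1)"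
proof -
  have vals: "\<forall>i. v $ i \<in> {0, 1}" and card: "card {i. v $ i \<noteq> 0} \<le> 1"
    using assms by (auto simp: actions_def)
  show ?thesis
  proof (cases "{i. v $ i \<noteq> 0} = {}")
    case True then have "v = 0" by (auto simp: vec_eq_iff)
    then show ?thesis by simp
  next
    case False
    then obtain i0 where i0: "v $ i0 \<noteq> 0" by auto
    have "{i. v $ i \<noteq> 0} = {i0}"
    proof -
      have "finite {i. v $ i \<noteq> 0}" by simp
      then show ?thesis using card i0 by (metis (mono_tags, lifting) False card_1_singletonE card_eq_0_iff le_antisym less_one mem_Collect_eq nat_less_le singletonD)
    qed
    have "v $ j = axis i0 1 $ j" for j
    proof (cases "j = i0")
      case True then show ?thesis using vals i0 by (auto simp: axis_def)
    next
      case False then have "v $ j = 0" using \<open>{i. v $ i \<noteq> 0} = {i0}\<close> by blast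
      then show ?thesis using False by (simp add: axis_def)
    qed
    then have "v = axis i0 1" by (simp add: vec_eq_iff)
    then show ?thesis by blast
  qed
qed

lemma zero_in_actions: "(0 :: real ^ 'm) \<in> actions"
  by (simp add: actions_def)

lemma axis_in_actions: "(axis i 1 :: real ^ 'm) \<in> actions"
proof -
  have "{j. (axis i 1 :: real ^ 'm) $ j \<noteq> 0} = {i}" by (auto simp: axis_def)
  then show ?thesis by (auto simp: actions_def axis_def)
qed

lemma shape:
  fixes v dd :: "real ^ 'm"
  assumes v: "v \<in> actions" and dv: "\<forall>i. dd $ i \<in> {0, 1}" and sup: "\<forall>i. v $ i = 0 \<longrightarrow> dd $ i = 0"
  shows "(v = 0 \<and> dd = 0) \<or> (\<exists>i. v = axis i 1 \<and> (dd = 0 \<or> dd = axis i 1))"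
proof (cases "v = 0")
  case True
  then have "dd = 0" using sup by (auto simp: vec_eq_iff)
  then show ?thesis using True by simp
next
  case False
  then obtain i where vi: "v = axis i 1" using actions_cases[OF v] by blast
  have oth: "dd $ j = 0" if "j \<noteq> i" for j using sup that vi by (auto simp: axis_def)
  show ?thesis
  proof (cases "dd $ i = 0")
    case True
    then have "dd = 0" using oth by (metis vec_eq_iff zero_index)
    then show ?thesis using vi by blast
  next
    case False
    then have "dd $ i = 1" using dv by auto
    then have "dd = axis i 1" using oth by (auto simp: vec_eq_iff axis_def)
    then show ?thesis using vi by blast
  qed
qed

lemma comp_sq_le:
  fixes v :: "real ^ 'm"
  shows "(v $ i)\<^sup>2 \<le> v \<bullet> v"
proof -
  have "v \<bullet> v = (\<Sum>j\<in>UNIV. (v $ j)\<^sup>2)" by (simp add: inner_vec_def power2_eq_square)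
  also have "\<dots> \<ge> (v $ i)\<^sup>2" by (rule member_le_sum) auto
  finally show ?thesis .
qed

lemma case1_det:
  fixes lu ld uu dd :: "real ^ 'm" and lx xx \<tau> :: real
  assumes norm1: "lx\<^sup>2 + lu \<bullet> lu + ld \<bullet> ld = 1" and tl: "\<tau> \<le> \<bar>lx\<bar>" and tau: "0 < \<tau>" "\<tau> < 1"
    and sh: "(uu = 0 \<and> dd = 0) \<or> (\<exists>i. uu = axis i 1 \<and> (dd = 0 \<or> dd = axis i 1))"
    and xT: "sqrt (1 - \<tau>\<^sup>2) / \<tau> * ((1 + 4 * sqrt (real CARD('m))) / (2 * sqrt (2 * real CARD('m)))) \<le> \<bar>xx\<bar>"
  shows "sqrt ((1 - \<tau>\<^sup>2) / (8 * real CARD('m))) \<le> \<bar>(lx, lu, ld) \<bullet> (xx, uu, dd)\<bar>"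
proof -
  define m where "m = real CARD('m)"
  define s where "s = sqrt (1 - \<tau>\<^sup>2)"
  define q where "q = sqrt (2 * m)"
  have m1: "m \<ge> 1" unfolding m_def by (simp add: Suc_le_eq)
  have q0: "q > 0" unfolding q_def using m1 by simp
  have t2: "\<tau>\<^sup>2 \<le> 1" using tau by (intro power_le_one) auto
  have s0: "s \<ge> 0" unfolding s_def using t2 by simp
  have ss: "s\<^sup>2 = 1 - \<tau>\<^sup>2" unfolding s_def using t2 by simp
  have sq8: "sqrt (8 * m) = 2 * q" unfolding q_def
    by (metis mult.assoc num_double real_sqrt_mult real_sqrt_four numeral_times_numeral)
  have sqm: "sqrt 2 * sqrt m = q" unfolding q_def by (simp add: real_sqrt_mult)
  have lhs: "sqrt ((1 - \<tau>\<^sup>2) / (8 * real CARD('m))) = s / (2 * q)"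
    unfolding s_def m_def[symmetric] by (simp add: real_sqrt_divide sq8)
  define R where "R = lu \<bullet> uu + ld \<bullet> dd"
  have inn: "(lx, lu, ld) \<bullet> (xx, uu, dd) = lx * xx + R" by (simp add: R_def)
  have lx2: "lx\<^sup>2 \<ge> \<tau>\<^sup>2" using tl tau by (metis abs_ge_zero abs_le_square_iff less_imp_le power2_abs abs_of_nonneg)
  have Rb: "\<bar>R\<bar> \<le> sqrt 2 * s"
  proof -
    from sh consider (z) "uu = 0 \<and> dd = 0" | (ax) i where "uu = axis i 1" "dd = 0 \<or> dd = axis i 1" by blast
    then show ?thesis
    proof cases
      case z then show ?thesis using s0 by (simp add: R_def)
    next
      case (ax i)
      then have ui: "uu = axis i 1" and di: "dd = 0 \<or> dd = axis i 1" by auto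
      have "\<bar>R\<bar> \<le> \<bar>lu $ i\<bar> + \<bar>ld $ i\<bar>" using di by (auto simp: R_def ui inner_axis)
      also have "\<dots> \<le> sqrt 2 * sqrt ((lu $ i)\<^sup>2 + (ld $ i)\<^sup>2)"
      proof -
        have id: "(\<bar>lu $ i\<bar> + \<bar>ld $ i\<bar>)\<^sup>2 + (\<bar>lu $ i\<bar> - \<bar>ld $ i\<bar>)\<^sup>2 = 2 * ((lu $ i)\<^sup>2 + (ld $ i)\<^sup>2)"
          by (simp add: power2_eq_square algebra_simps abs_mult_self_eq)
        have "(\<bar>lu $ i\<bar> + \<bar>ld $ i\<bar>)\<^sup>2 \<le> 2 * ((lu $ i)\<^sup>2 + (ld $ i)\<^sup>2)"
          using id zero_le_power2[of "\<bar>lu $ i\<bar> - \<bar>ld $ i\<bar>"] by linarith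
        then have "\<bar>lu $ i\<bar> + \<bar>ld $ i\<bar> \<le> sqrt (2 * ((lu $ i)\<^sup>2 + (ld $ i)\<^sup>2))"
          by (simp add: real_le_rsqrt)
        then show ?thesis by (simp only: real_sqrt_mult)
      qed
      also have "\<dots> \<le> sqrt 2 * s"
      proof -
        have "(lu $ i)\<^sup>2 + (ld $ i)\<^sup>2 \<le> lu \<bullet> lu + ld \<bullet> ld" using comp_sq_le[of lu i] comp_sq_le[of ld i] by simp
        also have "\<dots> \<le> 1 - \<tau>\<^sup>2" using norm1 lx2 by simp
        finally show ?thesis unfolding s_def by simp
      qed
      finally show ?thesis .
    qed
  qed
  have "\<tau> * (s / \<tau> * ((1 + 4 * sqrt m) / (2 * q))) = s / (2 * q) + sqrt 2 * s"
  proof -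
    have "\<tau> * (s / \<tau> * ((1 + 4 * sqrt m) / (2 * q))) = s * (1 + 4 * sqrt m) / (2 * q)" using tau by simp
    also have "\<dots> = s / (2 * q) + s * (2 * sqrt m / q)" using q0 by (simp add: field_simps)
    also have "2 * sqrt m / q = sqrt 2"
    proof -
      have "2 = sqrt 2 * sqrt 2" by simp
      then have "2 * sqrt m = sqrt 2 * q" using sqm by (metis mult.assoc)
      then show ?thesis using q0 by (simp add: field_simps)
    qed
    finally show ?thesis by simp
  qed
  moreover have "\<tau> * (s / \<tau> * ((1 + 4 * sqrt m) / (2 * q))) \<le> \<bar>lx * xx\<bar>"
  proof -
    have "\<tau> * (s / \<tau> * ((1 + 4 * sqrt m) / (2 * q))) \<le> \<bar>lx\<bar> * \<bar>xx\<bar>"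
    proof -
      have xT': "s / \<tau> * ((1 + 4 * sqrt m) / (2 * q)) \<le> \<bar>xx\<bar>" using xT unfolding s_def m_def q_def .
      have T0: "0 \<le> s / \<tau> * ((1 + 4 * sqrt m) / (2 * q))" using s0 tau q0 m1
        by (intro mult_nonneg_nonneg divide_nonneg_nonneg) auto
      show ?thesis using xT' tl tau T0 by (intro mult_mono) auto
    qed
    then show ?thesis by (simp add: abs_mult)
  qed
  ultimately have "s / (2 * q) + sqrt 2 * s \<le> \<bar>lx * xx\<bar>" by simp
  then have "s / (2 * q) \<le> \<bar>lx * xx + R\<bar>" using Rb by linarith
  then show ?thesis using lhs inn by simp
qed

lemma case2_exists:
  fixes lu ld :: "real ^ 'm" and lx \<tau> :: real
  assumes norm1: "lx\<^sup>2 + lu \<bullet> lu + ld \<bullet> ld = 1" and tl: "\<bar>lx\<bar> < \<tau>"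
  shows "\<exists>i. (1 - \<tau>\<^sup>2) / real CARD('m) \<le> (lu $ i)\<^sup>2 + (ld $ i)\<^sup>2"
proof (rule ccontr)
  assume "\<not> ?thesis"
  then have lt: "(lu $ i)\<^sup>2 + (ld $ i)\<^sup>2 < (1 - \<tau>\<^sup>2) / real CARD('m)" for i by (simp add: not_le)
  have "lu \<bullet> lu + ld \<bullet> ld = (\<Sum>i\<in>UNIV. (lu $ i)\<^sup>2 + (ld $ i)\<^sup>2)"
    by (simp add: inner_vec_def power2_eq_square sum.distrib)
  also have "\<dots> < (\<Sum>i\<in>(UNIV::'m set). (1 - \<tau>\<^sup>2) / real CARD('m))"
    by (rule sum_strict_mono) (auto simp: lt)
  also have "\<dots> = 1 - \<tau>\<^sup>2" by simp
  finally have "lu \<bullet> lu + ld \<bullet> ld < 1 - \<tau>\<^sup>2" .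
  moreover have "lx\<^sup>2 < \<tau>\<^sup>2" using tl by (metis abs_ge_zero abs_less_iff less_le_trans power2_abs power_strict_mono zero_less_numeral)
  ultimately show False using norm1 by simp
qed

lemma three_vals:
  fixes A al be g :: real
  assumes g: "0 \<le> g" and big: "8 * g\<^sup>2 \<le> al\<^sup>2 + be\<^sup>2"
  shows "g \<le> \<bar>A\<bar> \<or> g \<le> \<bar>A + al\<bar> \<or> g \<le> \<bar>A + al + be\<bar>"
proof (rule ccontr)
  assume "\<not> ?thesis"
  then have h: "\<bar>A\<bar> < g" "\<bar>A + al\<bar> < g" "\<bar>A + al + be\<bar> < g" by auto
  then have "\<bar>al\<bar> < 2 * g" "\<bar>be\<bar> < 2 * g" by linarith+
  then have "al\<^sup>2 < (2 * g)\<^sup>2" "be\<^sup>2 < (2 * g)\<^sup>2"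
    by (metis abs_ge_zero abs_power2 power_strict_mono zero_less_numeral less_le_trans power2_abs)+
  then show False using big by (simp add: power_mult_distrib)
qed

lemma rv_meas:
  fixes f :: "'a \<Rightarrow> 'b::topological_space"
  assumes "S \<subseteq> Pow (space M)" "rv_events M f \<subseteq> S"
  shows "f \<in> borel_measurable (sigma (space M) S)"
proof (rule measurableI)
  fix B :: "'b set" assume "B \<in> sets borel"
  then have "f -` B \<inter> space M \<in> S" using assms(2) unfolding rv_events_def by blast
  then show "f -` B \<inter> space (sigma (space M) S) \<in> sets (sigma (space M) S)"
    using assms(1) by (simp add: sets_measure_of sigma_sets.Basic)
qed simp

lemma rv_sets: "f \<in> borel_measurable M \<Longrightarrow> rv_events M f \<subseteq> sets M"
  unfolding rv_events_def by (auto simp: measurable_sets)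

lemma rv_pow: "rv_events M f \<subseteq> Pow (space M)"
  unfolding rv_events_def by auto

lemma sig_sub: "S \<subseteq> sets M \<Longrightarrow> subalgebra M (sigma (space M) S)"
proof -
  assume S: "S \<subseteq> sets M"
  then have P: "S \<subseteq> Pow (space M)" using sets.sets_into_space by auto
  have "sigma_sets (space M) S \<subseteq> sets M" using S by (rule sets.sigma_sets_subset)
  then show ?thesis unfolding subalgebra_def using P by (simp add: sets_measure_of)
qed

lemma sig_mono: "S \<subseteq> S' \<Longrightarrow> S' \<subseteq> Pow (space M) \<Longrightarrow> sets (sigma (space M) S) \<subseteq> sets (sigma (space M) S')"
  by (simp add: sets_measure_of sigma_sets_mono')

locale patient = prob_space M for M :: "'a measure" +
  fixes W :: "real measure"
    and x w :: "nat \<Rightarrow> 'a \<Rightarrow> real"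
    and u d :: "nat \<Rightarrow> 'a \<Rightarrow> real ^ 'm"
    and a abar bbar cbar mubar wbar sig_s sig_w r \<tau> :: real
    and b c \<mu> :: "real ^ 'm"
    and k :: nat
    and e :: "nat \<Rightarrow> 'a \<Rightarrow> bool" and \<eta> :: "nat \<Rightarrow> 'a \<Rightarrow> real ^ 'm"
  assumes params: "0 < abar" "abar < 1" "0 \<le> a" "a \<le> abar"
      "\<forall>i. \<bar>b $ i\<bar> \<le> bbar" "\<forall>i. \<bar>c $ i\<bar> \<le> cbar" "\<forall>i. \<mu> $ i \<in> {-mubar..mubar}"
      "wbar > 0"
    and noise: "noise_law W wbar sig_s sig_w"
    and meas: "\<forall>t. x t \<in> borel_measurable M" "\<forall>t. w t \<in> borel_measurable M"
      "\<forall>t. u t \<in> borel_measurable M" "\<forall>t. d t \<in> borel_measurable M"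
    and init: "\<forall>\<omega>\<in>space M. x 0 \<omega> = 0 \<and> u 0 \<omega> = 0 \<and> d 0 \<omega> = 0"
    and dyn: "\<forall>t. \<forall>\<omega>\<in>space M. x (Suc t) \<omega> = a * x t \<omega> + b \<bullet> u t \<omega> + c \<bullet> d t \<omega> + w t \<omega>"
    and act: "\<forall>t. \<forall>\<omega>\<in>space M. t \<ge> 1 \<longrightarrow> u t \<omega> \<in> actions"
    and adh_vals: "\<forall>t i. \<forall>\<omega>\<in>space M. d t \<omega> $ i \<in> {0, 1}"
    and adh: "\<forall>t i. t \<ge> 1 \<longrightarrow> (AE \<omega> in M.
        real_cond_exp M (filtH M x u d w t) (\<lambda>\<omega>'. d t \<omega>' $ i) \<omega>
          = u t \<omega> $ i * sigmoid (x t \<omega> + \<mu> $ i))"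
    and noise_indep: "\<forall>t. \<forall>A\<in>sets (filtFw M x u d w t). \<forall>B\<in>sets borel.
        measure M (A \<inter> (w t -` B \<inter> space M)) = measure M A * measure W B"
    and r: "0 < r" "r \<le> 1" and k: "k \<ge> 1"
    and e_meas: "\<forall>t\<ge>1. {\<omega>\<in>space M. e t \<omega>} \<in> sets (filtF M x u d w (t - 1))"
    and eta_meas: "\<forall>t\<ge>1. \<eta> t \<in> borel_measurable M \<and> (\<forall>\<omega>\<in>space M. \<eta> t \<omega> \<in> actions)"
    and eta_unif: "\<forall>t\<ge>1. \<forall>A\<in>sets (filtF M x u d w (t - 1)). \<forall>v\<in>actions.
            measure M (A \<inter> {\<omega>\<in>space M. \<eta> t \<omega> = v}) = measure M A / real (CARD('m) + 1)"
    and e_u: "\<forall>t\<ge>1. \<forall>\<omega>\<in>space M. e t \<omega> \<longrightarrow> u t \<omega> = \<eta> t \<omega>"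
    and e_count: "\<forall>j. AE \<omega> in M. real (card {t\<in>{j+1..j+k}. e t \<omega>}) \<ge> of_int \<lceil>r * real k\<rceil>"
    and tau: "0 < \<tau>" "\<tau> < 1"
begin

abbreviation "Fw \<equiv> filtFw M x u d w"
abbreviation "FF \<equiv> filtF M x u d w"
abbreviation "HH \<equiv> filtH M x u d w"

definition "gFw t = (\<Union>s\<in>{..t}. rv_events M (x s) \<union> rv_events M (u s) \<union> rv_events M (d s)) \<union> (\<Union>s\<in>{..<t}. rv_events M (w s))"
definition "gF t = (\<Union>s\<in>{..t}. rv_events M (x s) \<union> rv_events M (u s) \<union> rv_events M (d s) \<union> rv_events M (w s))"
definition "gH t = (\<Union>s\<in>{..t}. rv_events M (x s) \<union> rv_events M (u s)) \<union> (\<Union>s\<in>{..<t}. rv_events M (d s) \<union> rv_events M (w s))"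

lemma Fw_def': "Fw t = sigma (space M) (gFw t)" unfolding filtFw_def gFw_def ..
lemma F_def': "FF t = sigma (space M) (gF t)" unfolding filtF_def gF_def ..
lemma H_def': "HH t = sigma (space M) (gH t)" unfolding filtH_def gH_def ..

lemma xM[measurable]: "x t \<in> borel_measurable M" using meas by auto
lemma wM[measurable]: "w t \<in> borel_measurable M" using meas by auto
lemma uM[measurable]: "u t \<in> borel_measurable M" using meas by auto
lemma dM[measurable]: "d t \<in> borel_measurable M" using meas by auto

lemma gFw_sets: "gFw t \<subseteq> sets M" unfolding gFw_def using rv_sets[OF xM] rv_sets[OF uM] rv_sets[OF dM] rv_sets[OF wM] by blast
lemma gF_sets: "gF t \<subseteq> sets M" unfolding gF_def using rv_sets[OF xM] rv_sets[OF uM] rv_sets[OF dM] rv_sets[OF wM] by blast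
lemma gH_sets: "gH t \<subseteq> sets M" unfolding gH_def using rv_sets[OF xM] rv_sets[OF uM] rv_sets[OF dM] rv_sets[OF wM] by blast

lemma gFw_pow: "gFw t \<subseteq> Pow (space M)" using gFw_sets sets.sets_into_space by blast
lemma gF_pow: "gF t \<subseteq> Pow (space M)" using gF_sets sets.sets_into_space by blast
lemma gH_pow: "gH t \<subseteq> Pow (space M)" using gH_sets sets.sets_into_space by blast

lemma Fw_sub: "subalgebra M (Fw t)" unfolding Fw_def' by (rule sig_sub[OF gFw_sets])
lemma F_sub: "subalgebra M (FF t)" unfolding F_def' by (rule sig_sub[OF gF_sets])
lemma H_sub: "subalgebra M (HH t)" unfolding H_def' by (rule sig_sub[OF gH_sets])

lemma space_Fw[simp]: "space (Fw t) = space M" using Fw_sub by (simp add: subalgebra_def)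
lemma space_F[simp]: "space (FF t) = space M" using F_sub by (simp add: subalgebra_def)
lemma space_H[simp]: "space (HH t) = space M" using H_sub by (simp add: subalgebra_def)

lemma sets_Fw_M: "A \<in> sets (Fw t) \<Longrightarrow> A \<in> sets M" using Fw_sub by (auto simp: subalgebra_def)
lemma sets_F_M: "A \<in> sets (FF t) \<Longrightarrow> A \<in> sets M" using F_sub by (auto simp: subalgebra_def)
lemma sets_H_M: "A \<in> sets (HH t) \<Longrightarrow> A \<in> sets M" using H_sub by (auto simp: subalgebra_def)

lemma gF_x: "sa \<le> s \<Longrightarrow> rv_events M (x sa) \<subseteq> gF s" unfolding gF_def by auto
lemma gF_u: "sa \<le> s \<Longrightarrow> rv_events M (u sa) \<subseteq> gF s" unfolding gF_def by auto
lemma gF_d: "sa \<le> s \<Longrightarrow> rv_events M (d sa) \<subseteq> gF s" unfolding gF_def by auto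
lemma gF_w: "sa \<le> s \<Longrightarrow> rv_events M (w sa) \<subseteq> gF s" unfolding gF_def by auto

lemma Fw_mono: "s \<le> t \<Longrightarrow> sets (Fw s) \<subseteq> sets (Fw t)"
  unfolding Fw_def' by (rule sig_mono[OF _ gFw_pow]) (auto simp: gFw_def)

lemma gFw_gF: "j \<le> s \<Longrightarrow> gFw j \<subseteq> gF s"
proof -
  assume js: "j \<le> s"
  have "rv_events M (x sa) \<union> rv_events M (u sa) \<union> rv_events M (d sa) \<subseteq> gF s" if "sa \<le> j" for sa
    using gF_x[of sa s] gF_u[of sa s] gF_d[of sa s] that js by auto
  moreover have "rv_events M (w sa) \<subseteq> gF s" if "sa < j" for sa
    using gF_w[of sa s] that js by auto
  ultimately show ?thesis unfolding gFw_def by blast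
qed

lemma Fw_F: "j \<le> s \<Longrightarrow> sets (Fw j) \<subseteq> sets (FF s)"
  unfolding Fw_def' F_def' by (rule sig_mono[OF gFw_gF gF_pow])

lemma gF_gH: "gF s \<subseteq> gH (Suc s)"
proof -
  have "rv_events M (x sa) \<union> rv_events M (u sa) \<union> rv_events M (d sa) \<union> rv_events M (w sa) \<subseteq> gH (Suc s)" if "sa \<le> s" for sa
    using that unfolding gH_def by (auto simp: less_Suc_eq_le)
  then show ?thesis unfolding gF_def by blast
qed

lemma F_H: "sets (FF s) \<subseteq> sets (HH (Suc s))"
  unfolding H_def' F_def' by (rule sig_mono[OF gF_gH gH_pow])

lemma x_Fw[measurable]: "x t \<in> borel_measurable (Fw t)"
  unfolding Fw_def' by (rule rv_meas[OF gFw_pow]) (auto simp: gFw_def)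
lemma u_Fw[measurable]: "u t \<in> borel_measurable (Fw t)"
  unfolding Fw_def' by (rule rv_meas[OF gFw_pow]) (auto simp: gFw_def)
lemma d_Fw[measurable]: "d t \<in> borel_measurable (Fw t)"
  unfolding Fw_def' by (rule rv_meas[OF gFw_pow]) (auto simp: gFw_def)

lemma x_F[measurable]: "x s \<in> borel_measurable (FF s)"
  unfolding F_def' by (rule rv_meas[OF gF_pow]) (auto simp: gF_def)
lemma u_F[measurable]: "u s \<in> borel_measurable (FF s)"
  unfolding F_def' by (rule rv_meas[OF gF_pow]) (auto simp: gF_def)
lemma d_F[measurable]: "d s \<in> borel_measurable (FF s)"
  unfolding F_def' by (rule rv_meas[OF gF_pow]) (auto simp: gF_def)
lemma w_F[measurable]: "w s \<in> borel_measurable (FF s)"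
  unfolding F_def' by (rule rv_meas[OF gF_pow]) (auto simp: gF_def)

lemma x_H[measurable]: "x t \<in> borel_measurable (HH t)"
  unfolding H_def' by (rule rv_meas[OF gH_pow]) (auto simp: gH_def)
lemma u_H[measurable]: "u t \<in> borel_measurable (HH t)"
  unfolding H_def' by (rule rv_meas[OF gH_pow]) (auto simp: gH_def)

definition "xt s = (\<lambda>\<omega>. a * x s \<omega> + b \<bullet> u s \<omega> + c \<bullet> d s \<omega>)"

lemma xt_Fw[measurable]: "xt s \<in> borel_measurable (Fw s)"
  unfolding xt_def by measurable

lemma x_next: "\<omega> \<in> space M \<Longrightarrow> x (Suc s) \<omega> = xt s \<omega> + w s \<omega>"
  using dyn by (simp add: xt_def)

lemma x_next_F[measurable]: "x (Suc s) \<in> borel_measurable (FF s)"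
proof -
  have "(\<lambda>\<omega>. xt s \<omega> + w s \<omega>) \<in> borel_measurable (FF s)" unfolding xt_def by measurable
  then show ?thesis by (subst measurable_cong[where g = "\<lambda>\<omega>. xt s \<omega> + w s \<omega>"]) (auto simp: x_next)
qed

end

lemma sigmoid_meas[measurable]: "sigmoid \<in> borel_measurable borel"
  unfolding sigmoid_def[abs_def] by measurable

lemma vec_nth_meas[measurable]: "(\<lambda>v::real^'m. v $ i) \<in> borel_measurable borel"
  by (intro borel_measurable_continuous_onI continuous_intros)

lemma sigmoid_pos: "0 < sigmoid y" unfolding sigmoid_def by (simp add: add_pos_pos)
lemma sigmoid_less1: "sigmoid y < 1" unfolding sigmoid_def by (simp add: add_pos_pos)
lemma sigmoid_compl: "1 - sigmoid y = sigmoid (- y)"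
proof -
  have p1: "1 + exp (- y) > 0" "1 + exp y > 0" by (simp_all add: add_pos_pos)
  have "exp (- y) * exp y = 1" by (simp add: exp_minus_inverse mult.commute)
  then show ?thesis unfolding sigmoid_def using p1 by (simp add: field_simps)
qed
lemma sigmoid_mono: "y \<le> z \<Longrightarrow> sigmoid y \<le> sigmoid z"
  unfolding sigmoid_def by (simp add: add_pos_pos frac_le)

context patient begin

definition "Cx = (bbar + cbar + wbar) / (1 - abar)"
definition "plow = sigmoid (- Cx - mubar)"

lemma wlaw: "B \<in> sets borel \<Longrightarrow> measure M (w s -` B \<inter> space M) = measure W B"
proof -
  assume B: "B \<in> sets borel"
  have "space M \<in> sets (Fw s)" by (metis sets.top space_Fw)
  then have "measure M (space M \<inter> (w s -` B \<inter> space M)) = measure M (space M) * measure W B"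
    using noise_indep B by blast
  then show ?thesis by (simp add: Int_absorb1 prob_space)
qed

lemma wbound: "AE \<omega> in M. \<bar>w s \<omega>\<bar> \<le> wbar"
proof -
  have Wp: "prob_space W" and sW: "sets W = sets borel" and aeW: "AE y in W. \<bar>y\<bar> \<le> wbar"
    using noise unfolding noise_law_def by blast+
  have ob: "{y::real. wbar < \<bar>y\<bar>} \<in> sets borel"
    by (intro borel_open open_Collect_less continuous_intros)
  have spW: "space W = UNIV" using sets_eq_imp_space_eq[OF sW] by simp
  have "emeasure W {y\<in>space W. wbar < \<bar>y\<bar>} = 0"
    by (rule emeasure_eq_0_AE) (use aeW in \<open>eventually_elim, auto\<close>)
  then have "emeasure W {y. wbar < \<bar>y\<bar>} = 0" using spW by simp
  then have "measure W {y. wbar < \<bar>y\<bar>} = 0" by (simp add: measure_def)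
  then have m0: "measure M (w s -` {y. wbar < \<bar>y\<bar>} \<inter> space M) = 0" using wlaw[OF ob] by simp
  have N: "w s -` {y. wbar < \<bar>y\<bar>} \<inter> space M \<in> sets M" using ob by measurable
  show ?thesis
  proof (subst AE_iff_measurable[OF N])
    show "{\<omega> \<in> space M. \<not> \<bar>w s \<omega>\<bar> \<le> wbar} = w s -` {y. wbar < \<bar>y\<bar>} \<inter> space M" by auto
    show "emeasure M (w s -` {y. wbar < \<bar>y\<bar>} \<inter> space M) = 0" using m0 N by (simp add: emeasure_eq_measure)
  qed
qed

lemma sfs_H: "sigma_finite_subalgebra M (HH t)"
  by (rule finite_measure_subalgebra_is_sigma_finite) (unfold_locales, rule H_sub)

lemma d_int: "integrable M (\<lambda>\<omega>. d t \<omega> $ i)"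
proof (rule integrable_const_bound[where B = 1])
  show "AE \<omega> in M. norm (d t \<omega> $ i) \<le> 1"
  proof (rule AE_I2)
    fix \<omega> assume "\<omega> \<in> space M"
    then have "d t \<omega> $ i \<in> {0, 1}" using adh_vals by blast
    then show "norm (d t \<omega> $ i) \<le> 1" by auto
  qed
qed measurable

lemma adh_int:
  assumes t: "t \<ge> 1" and B: "B \<in> sets (HH t)"
  shows "(\<integral>\<omega>. indicator B \<omega> * d t \<omega> $ i \<partial>M) = (\<integral>\<omega>. indicator B \<omega> * (u t \<omega> $ i * sigmoid (x t \<omega> + \<mu> $ i)) \<partial>M)"
proof -
  interpret S: sigma_finite_subalgebra M "HH t" by (rule sfs_H)
  have "(\<integral>\<omega>. indicator B \<omega> * d t \<omega> $ i \<partial>M) = (\<integral>\<omega>. indicator B \<omega> * real_cond_exp M (HH t) (\<lambda>\<omega>'. d t \<omega>' $ i) \<omega> \<partial>M)"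
    using S.real_cond_exp_intA[OF d_int B, of t i] unfolding set_lebesgue_integral_def by simp
  also have "\<dots> = (\<integral>\<omega>. indicator B \<omega> * (u t \<omega> $ i * sigmoid (x t \<omega> + \<mu> $ i)) \<partial>M)"
  proof (rule integral_cong_AE)
    have BM: "B \<in> sets M" using B by (rule sets_H_M)
    show "(\<lambda>\<omega>. indicator B \<omega> * real_cond_exp M (HH t) (\<lambda>\<omega>'. d t \<omega>' $ i) \<omega>) \<in> borel_measurable M"
      using BM by measurable
    show "(\<lambda>\<omega>. indicator B \<omega> * (u t \<omega> $ i * sigmoid (x t \<omega> + \<mu> $ i))) \<in> borel_measurable M"
      using BM by measurable
    show "AE \<omega> in M. indicator B \<omega> * real_cond_exp M (HH t) (\<lambda>\<omega>'. d t \<omega>' $ i) \<omega> = indicator B \<omega> * (u t \<omega> $ i * sigmoid (x t \<omega> + \<mu> $ i))"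
      using adh t by (auto elim!: eventually_mono)
  qed
  finally show ?thesis .
qed

lemma dsupp: "AE \<omega> in M. u t \<omega> $ i = 0 \<longrightarrow> d t \<omega> $ i = 0"
proof (cases "t \<ge> 1")
  case False
  then have "t = 0" by simp
  then show ?thesis using init by (auto intro!: AE_I2)
next
  case t: True
  define B where "B = {\<omega>\<in>space M. u t \<omega> $ i = 0}"
  have "{\<omega>\<in>space (HH t). u t \<omega> $ i = 0} \<in> sets (HH t)" by measurable
  then have BH: "B \<in> sets (HH t)" unfolding B_def by simp
  have BM: "B \<in> sets M" using BH by (rule sets_H_M)
  have "(\<integral>\<omega>. indicator B \<omega> * d t \<omega> $ i \<partial>M) = (\<integral>\<omega>. indicator B \<omega> * (u t \<omega> $ i * sigmoid (x t \<omega> + \<mu> $ i)) \<partial>M)"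
    by (rule adh_int[OF t BH])
  also have "(\<lambda>\<omega>. indicator B \<omega> * (u t \<omega> $ i * sigmoid (x t \<omega> + \<mu> $ i))) = (\<lambda>\<omega>. 0)"
    by (auto simp: B_def indicator_def fun_eq_iff)
  also have "(\<integral>\<omega>. 0 \<partial>M) = (0::real)" by simp
  finally have i0: "(\<integral>\<omega>. indicator B \<omega> * d t \<omega> $ i \<partial>M) = 0" .
  have intg: "integrable M (\<lambda>\<omega>. indicator B \<omega> * d t \<omega> $ i)"
    using integrable_mult_indicator[OF BM d_int] by simp
  have nn: "AE \<omega> in M. 0 \<le> indicator B \<omega> * d t \<omega> $ i"
  proof (rule AE_I2)
    fix \<omega> assume "\<omega> \<in> space M"
    then have "d t \<omega> $ i \<in> {0, 1}" using adh_vals by blast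
    then show "0 \<le> indicator B \<omega> * d t \<omega> $ i" by (auto simp: indicator_def)
  qed
  have "AE \<omega> in M. indicator B \<omega> * d t \<omega> $ i = 0"
    using integral_nonneg_eq_0_iff_AE[OF intg nn] i0 by simp
  from this AE_space show ?thesis by eventually_elim (auto simp: B_def indicator_def split: if_splits)
qed

lemma u_act: "u t \<omega> \<in> actions" if "\<omega> \<in> space M"
proof (cases "t \<ge> 1")
  case True then show ?thesis using act that by blast
next
  case False then have "t = 0" by simp
  then show ?thesis using init that zero_in_actions by simp
qed

lemma shapeAE: "AE \<omega> in M. (u t \<omega> = 0 \<and> d t \<omega> = 0) \<or> (\<exists>i. u t \<omega> = axis i 1 \<and> (d t \<omega> = 0 \<or> d t \<omega> = axis i 1))"
proof -
  have "AE \<omega> in M. \<forall>i\<in>UNIV. u t \<omega> $ i = 0 \<longrightarrow> d t \<omega> $ i = 0"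
    by (rule AE_finite_allI) (auto intro: dsupp)
  with AE_space show ?thesis
  proof eventually_elim
    case (elim \<omega>)
    then show ?case using shape[OF u_act[of \<omega> t]] adh_vals by auto
  qed
qed

lemma bbar0: "0 \<le> bbar" using params(5) by (meson abs_ge_zero order_trans)
lemma cbar0: "0 \<le> cbar" using params(6) by (meson abs_ge_zero order_trans)

lemma Cx0: "0 \<le> Cx" unfolding Cx_def using bbar0 cbar0 params by simp

lemma Cx_eq: "abar * Cx + (bbar + cbar + wbar) = Cx"
  unfolding Cx_def using params by (simp add: field_simps)

lemma xbound: "AE \<omega> in M. \<bar>x t \<omega>\<bar> \<le> Cx"
proof (induction t)
  case 0
  then show ?case using init Cx0 by (auto intro!: AE_I2)
next
  case (Suc t)
  from Suc shapeAE[of t] wbound[of t] AE_space show ?case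
  proof eventually_elim
    case (elim \<omega>)
    have bu: "\<bar>b \<bullet> u t \<omega>\<bar> \<le> bbar" and cd: "\<bar>c \<bullet> d t \<omega>\<bar> \<le> cbar"
      using elim(2) params(5,6) bbar0 cbar0 by (auto simp: inner_axis)
    have "\<bar>x (Suc t) \<omega>\<bar> = \<bar>a * x t \<omega> + b \<bullet> u t \<omega> + c \<bullet> d t \<omega> + w t \<omega>\<bar>" using dyn elim(4) by simp
    also have "\<dots> \<le> a * \<bar>x t \<omega>\<bar> + bbar + cbar + wbar"
    proof -
      have "\<bar>a * x t \<omega>\<bar> = a * \<bar>x t \<omega>\<bar>" using params(3) by (simp add: abs_mult)
      then show ?thesis using bu cd elim(3) by (smt (verit))
    qed
    also have "\<dots> \<le> abar * Cx + bbar + cbar + wbar"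
      using elim(1) params(3,4) Cx0 by (simp add: mult_mono)
    also have "\<dots> = Cx" using Cx_eq by simp
    finally show ?case .
  qed
qed

end

context patient begin

definition "gg = sqrt ((1 - \<tau>\<^sup>2) / (8 * real CARD('m)))"
definition "Tthr = sqrt (1 - \<tau>\<^sup>2) / \<tau> * ((1 + 4 * sqrt (real CARD('m))) / (2 * sqrt (2 * real CARD('m))))"
definition "p1 = measure W {y. Tthr \<le> \<bar>y\<bar>}"

definition "Eset lx lu ld t = {\<omega>\<in>space M. gg \<le> \<bar>(lx, lu, ld) \<bullet> (x t \<omega>, u t \<omega>, d t \<omega>)\<bar>}"

lemma inner_triple: "(lx, lu, ld) \<bullet> (xx, uu, dd) = lx * xx + lu \<bullet> uu + ld \<bullet> dd"
  by simp

lemma Eset_sets[measurable]: "Eset lx lu ld t \<in> sets M"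
  unfolding Eset_def inner_triple by measurable

lemma case1_step:
  assumes norm1: "lx\<^sup>2 + lu \<bullet> lu + ld \<bullet> ld = 1" and tl: "\<tau> \<le> \<bar>lx\<bar>" and js: "j \<le> s" and A: "A \<in> sets (Fw j)"
  shows "p1 * measure M A \<le> measure M (A \<inter> Eset lx lu ld (Suc s))"
proof -
  have As: "A \<in> sets (Fw s)" using A Fw_mono[OF js] by auto
  have AM: "A \<in> sets M" using A by (rule sets_Fw_M)
  have ind: "\<forall>A'\<in>sets (Fw s). \<forall>B\<in>sets borel. measure M (A' \<inter> (w s -` B \<inter> space M)) = measure M A' * measure M (w s -` B \<inter> space M)"
    using noise_indep wlaw by simp
  have q: "\<forall>c. p1 \<le> measure M {\<omega>\<in>space M. Tthr \<le> \<bar>c + w s \<omega>\<bar>}"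
  proof
    fix cc
    have cl: "{y::real. Tthr \<le> \<bar>cc + y\<bar>} \<in> sets borel"
      by (intro borel_closed closed_Collect_le continuous_intros)
    have "{\<omega>\<in>space M. Tthr \<le> \<bar>cc + w s \<omega>\<bar>} = w s -` {y. Tthr \<le> \<bar>cc + y\<bar>} \<inter> space M" by auto
    then have "measure M {\<omega>\<in>space M. Tthr \<le> \<bar>cc + w s \<omega>\<bar>} = measure W {y. Tthr \<le> \<bar>cc + y\<bar>}"
      using wlaw[OF cl] by simp
    moreover have "p1 \<le> measure W {y. Tthr \<le> \<bar>cc + y\<bar>}" unfolding p1_def by (rule anderson[OF noise])
    ultimately show "p1 \<le> measure M {\<omega>\<in>space M. Tthr \<le> \<bar>cc + w s \<omega>\<bar>}" by simp
  qed
  have "p1 * measure M A \<le> measure M (A \<inter> {\<omega>\<in>space M. Tthr \<le> \<bar>xt s \<omega> + w s \<omega>\<bar>})"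
    by (rule indep_lower[OF prob_space_axioms Fw_sub As xt_Fw wM ind q])
  also have "\<dots> \<le> measure M (A \<inter> Eset lx lu ld (Suc s))"
  proof (rule finite_measure_mono_AE)
    show "A \<inter> Eset lx lu ld (Suc s) \<in> sets M" using AM by measurable
    from shapeAE[of "Suc s"] AE_space
    show "AE \<omega> in M. \<omega> \<in> A \<inter> {\<omega> \<in> space M. Tthr \<le> \<bar>xt s \<omega> + w s \<omega>\<bar>} \<longrightarrow> \<omega> \<in> A \<inter> Eset lx lu ld (Suc s)"
    proof eventually_elim
      case (elim \<omega>)
      show ?case
      proof
        assume h: "\<omega> \<in> A \<inter> {\<omega> \<in> space M. Tthr \<le> \<bar>xt s \<omega> + w s \<omega>\<bar>}"
        then have "Tthr \<le> \<bar>x (Suc s) \<omega>\<bar>" using x_next elim(2) by simp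
        then have "gg \<le> \<bar>(lx, lu, ld) \<bullet> (x (Suc s) \<omega>, u (Suc s) \<omega>, d (Suc s) \<omega>)\<bar>"
          unfolding gg_def using case1_det[OF norm1 tl tau elim(1)] unfolding Tthr_def by blast
        then show "\<omega> \<in> A \<inter> Eset lx lu ld (Suc s)" using h elim(2) by (simp add: Eset_def)
      qed
    qed
  qed
  finally show ?thesis .
qed

lemma plow_le: "\<bar>y\<bar> \<le> Cx \<Longrightarrow> plow \<le> sigmoid (y + \<mu> $ i)" "\<bar>y\<bar> \<le> Cx \<Longrightarrow> plow \<le> 1 - sigmoid (y + \<mu> $ i)"
proof -
  assume y: "\<bar>y\<bar> \<le> Cx"
  have mu: "- mubar \<le> \<mu> $ i" "\<mu> $ i \<le> mubar" using params(7) by auto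
  show "plow \<le> sigmoid (y + \<mu> $ i)" unfolding plow_def using y mu by (intro sigmoid_mono) linarith
  show "plow \<le> 1 - sigmoid (y + \<mu> $ i)" unfolding plow_def sigmoid_compl using y mu by (intro sigmoid_mono) linarith
qed

lemma plow_bounds: "0 \<le> plow" "plow \<le> 1"
  unfolding plow_def using sigmoid_pos sigmoid_less1 by (auto intro: less_imp_le)

lemma adh_lb:
  assumes t: "t \<ge> 1" and B: "B \<in> sets (HH t)" and ui: "\<forall>\<omega>\<in>B. u t \<omega> $ i = 1" and v: "v \<in> {0, 1}"
  shows "plow * measure M B \<le> measure M (B \<inter> {\<omega>\<in>space M. d t \<omega> $ i = v})"
proof -
  have BM: "B \<in> sets M" using B by (rule sets_H_M)
  have Bsp: "B \<subseteq> space M" using BM sets.sets_into_space by auto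
  define f where "f = (\<lambda>\<omega>. if v = 1 then d t \<omega> $ i else 1 - d t \<omega> $ i)"
  define s where "s = (\<lambda>\<omega>. if v = 1 then sigmoid (x t \<omega> + \<mu> $ i) else 1 - sigmoid (x t \<omega> + \<mu> $ i))"
  have intB: "integrable M (indicator B :: 'a \<Rightarrow> real)" using BM by (simp add: less_top[symmetric])
  have intBd: "integrable M (\<lambda>\<omega>. indicator B \<omega> * d t \<omega> $ i)" using integrable_mult_indicator[OF BM d_int] by simp
  have sig_meas: "(\<lambda>\<omega>. sigmoid (x t \<omega> + \<mu> $ i)) \<in> borel_measurable M" by measurable
  have intBs: "integrable M (\<lambda>\<omega>. indicator B \<omega> * sigmoid (x t \<omega> + \<mu> $ i))"
  proof -
    have "integrable M (\<lambda>\<omega>. sigmoid (x t \<omega> + \<mu> $ i))"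
      by (rule integrable_const_bound[where B = 1]) (auto intro!: AE_I2 simp: sigmoid_less1 sigmoid_pos less_imp_le abs_of_pos)
    from integrable_mult_indicator[OF BM this] show ?thesis by simp
  qed
  have "measure M (B \<inter> {\<omega>\<in>space M. d t \<omega> $ i = v}) = (\<integral>\<omega>. indicator B \<omega> * f \<omega> \<partial>M)"
  proof -
    have "(\<integral>\<omega>. indicator B \<omega> * f \<omega> \<partial>M) = (\<integral>\<omega>. indicator (B \<inter> {\<omega>\<in>space M. d t \<omega> $ i = v}) \<omega> \<partial>M)"
    proof (rule Bochner_Integration.integral_cong[OF refl])
      fix \<omega> assume "\<omega> \<in> space M"
      then have "d t \<omega> $ i \<in> {0, 1}" using adh_vals by blast
      then show "indicator B \<omega> * f \<omega> = indicator (B \<inter> {\<omega>\<in>space M. d t \<omega> $ i = v}) \<omega>"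
        using v \<open>\<omega> \<in> space M\<close> by (auto simp: f_def indicator_def)
    qed
    also have "\<dots> = measure M (B \<inter> {\<omega>\<in>space M. d t \<omega> $ i = v})"
      using BM by (simp add: Int_absorb2 sets.sets_into_space Int_commute)
    finally show ?thesis by simp
  qed
  also have "(\<integral>\<omega>. indicator B \<omega> * f \<omega> \<partial>M) = (\<integral>\<omega>. indicator B \<omega> * s \<omega> \<partial>M)"
  proof -
    have ad: "(\<integral>\<omega>. indicator B \<omega> * d t \<omega> $ i \<partial>M) = (\<integral>\<omega>. indicator B \<omega> * sigmoid (x t \<omega> + \<mu> $ i) \<partial>M)"
    proof -
      have "(\<integral>\<omega>. indicator B \<omega> * d t \<omega> $ i \<partial>M) = (\<integral>\<omega>. indicator B \<omega> * (u t \<omega> $ i * sigmoid (x t \<omega> + \<mu> $ i)) \<partial>M)"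
        by (rule adh_int[OF t B])
      also have "\<dots> = (\<integral>\<omega>. indicator B \<omega> * sigmoid (x t \<omega> + \<mu> $ i) \<partial>M)"
        using ui by (intro Bochner_Integration.integral_cong) (auto simp: indicator_def)
      finally show ?thesis .
    qed
    show ?thesis
    proof (cases "v = 1")
      case True then show ?thesis using ad by (simp add: f_def s_def)
    next
      case False
      have "(\<integral>\<omega>. indicator B \<omega> * f \<omega> \<partial>M) = (\<integral>\<omega>. indicator B \<omega> - indicator B \<omega> * d t \<omega> $ i \<partial>M)"
        using False by (intro Bochner_Integration.integral_cong) (auto simp: f_def algebra_simps)
      also have "\<dots> = (\<integral>\<omega>. indicator B \<omega> \<partial>M) - (\<integral>\<omega>. indicator B \<omega> * d t \<omega> $ i \<partial>M)"
        using intB intBd by (rule Bochner_Integration.integral_diff)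
      also have "\<dots> = (\<integral>\<omega>. indicator B \<omega> \<partial>M) - (\<integral>\<omega>. indicator B \<omega> * sigmoid (x t \<omega> + \<mu> $ i) \<partial>M)"
        using ad by simp
      also have "\<dots> = (\<integral>\<omega>. indicator B \<omega> - indicator B \<omega> * sigmoid (x t \<omega> + \<mu> $ i) \<partial>M)"
        using intB intBs by (rule Bochner_Integration.integral_diff[symmetric])
      also have "\<dots> = (\<integral>\<omega>. indicator B \<omega> * s \<omega> \<partial>M)"
        using False by (intro Bochner_Integration.integral_cong) (auto simp: s_def algebra_simps)
      finally show ?thesis .
    qed
  qed
  also have "(\<integral>\<omega>. indicator B \<omega> * s \<omega> \<partial>M) \<ge> (\<integral>\<omega>. indicator B \<omega> * plow \<partial>M)"
  proof (rule integral_mono_AE)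
    show "integrable M (\<lambda>\<omega>. indicator B \<omega> * plow)" using intB by simp
    show "integrable M (\<lambda>\<omega>. indicator B \<omega> * s \<omega>)"
    proof (cases "v = 1")
      case True then show ?thesis using intBs by (simp add: s_def)
    next
      case False
      have "integrable M (\<lambda>\<omega>. indicator B \<omega> - indicator B \<omega> * sigmoid (x t \<omega> + \<mu> $ i))"
        using intB intBs by (rule Bochner_Integration.integrable_diff)
      then show ?thesis using False by (simp add: s_def algebra_simps)
    qed
    from xbound[of t] show "AE \<omega> in M. indicator B \<omega> * plow \<le> indicator B \<omega> * s \<omega>"
    proof eventually_elim
      case (elim \<omega>)
      then show ?case using plow_le[OF elim] by (auto simp: s_def indicator_def)
    qed
  qed
  also have "(\<integral>\<omega>. indicator B \<omega> * plow \<partial>M) = plow * measure M B"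
    using BM by (simp add: mult.commute)
  finally show ?thesis by simp
qed

end

lemma axis_ne0: "(axis i (1::real) :: real^'m) \<noteq> 0"
  by (metis axis_nth zero_index zero_neq_one)

lemma val0:
  fixes uu dd lu ld :: "real ^ 'm"
  assumes sh: "(uu = 0 \<and> dd = 0) \<or> (\<exists>i. uu = axis i 1 \<and> (dd = 0 \<or> dd = axis i 1))" and u0: "uu = 0"
  shows "(lx, lu, ld) \<bullet> (xx, uu, dd) = lx * xx"
  using sh u0 axis_ne0 by auto

lemma val1:
  fixes uu dd lu ld :: "real ^ 'm"
  assumes sh: "(uu = 0 \<and> dd = 0) \<or> (\<exists>i. uu = axis i 1 \<and> (dd = 0 \<or> dd = axis i 1))"
    and ui: "uu = axis i 1" and di: "dd $ i = 0"
  shows "(lx, lu, ld) \<bullet> (xx, uu, dd) = lx * xx + lu $ i"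
proof -
  from sh ui axis_ne0[of i] obtain i' where "axis i 1 = (axis i' 1 :: real^'m)" "dd = 0 \<or> dd = axis i' 1" by auto
  then have "i' = i" "dd = 0 \<or> dd = axis i 1" by (auto simp: axis_eq_axis)
  then have "dd = 0" using di by auto
  then show ?thesis using ui by (simp add: inner_axis)
qed

lemma val2:
  fixes uu dd lu ld :: "real ^ 'm"
  assumes sh: "(uu = 0 \<and> dd = 0) \<or> (\<exists>i. uu = axis i 1 \<and> (dd = 0 \<or> dd = axis i 1))"
    and ui: "uu = axis i 1" and di: "dd $ i = 1"
  shows "(lx, lu, ld) \<bullet> (xx, uu, dd) = lx * xx + lu $ i + ld $ i"
proof -
  from sh ui axis_ne0[of i] obtain i' where "axis i 1 = (axis i' 1 :: real^'m)" "dd = 0 \<or> dd = axis i' 1" by auto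
  then have "i' = i" "dd = 0 \<or> dd = axis i 1" by (auto simp: axis_eq_axis)
  then have "dd = axis i 1" using di by auto
  then show ?thesis using ui by (simp add: inner_axis)
qed

context patient begin

lemma gg0: "0 \<le> gg" unfolding gg_def using tau by (simp add: power_le_one)

lemma gg_sq: "8 * gg\<^sup>2 = (1 - \<tau>\<^sup>2) / real CARD('m)"
proof -
  have "\<tau>\<^sup>2 \<le> 1" using tau by (intro power_le_one) auto
  then have "0 \<le> (1 - \<tau>\<^sup>2) / (8 * real CARD('m))" by simp
  then have "gg\<^sup>2 = (1 - \<tau>\<^sup>2) / (8 * real CARD('m))" unfolding gg_def by simp
  then show ?thesis by (simp add: field_simps)
qed

lemma case2_step:
  assumes norm1: "lx\<^sup>2 + lu \<bullet> lu + ld \<bullet> ld = 1" and tl: "\<bar>lx\<bar> < \<tau>" and js: "j \<le> s" and A: "A \<in> sets (Fw j)"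
  shows "plow / (real CARD('m) + 1) * measure M (A \<inter> {\<omega>\<in>space M. e (Suc s) \<omega>}) \<le> measure M (A \<inter> Eset lx lu ld (Suc s))"
proof -
  define t where "t = Suc s"
  have t1: "t \<ge> 1" and ts: "t - 1 = s" by (auto simp: t_def)
  obtain i where big: "(1 - \<tau>\<^sup>2) / real CARD('m) \<le> (lu $ i)\<^sup>2 + (ld $ i)\<^sup>2"
    using case2_exists[OF norm1 tl] by blast
  define al where "al = lu $ i"
  define be where "be = ld $ i"
  have gsq: "8 * gg\<^sup>2 \<le> al\<^sup>2 + be\<^sup>2" using big gg_sq by (simp add: al_def be_def)
  define Mc where "Mc = real CARD('m) + 1"
  have Mc0: "Mc > 0" by (simp add: Mc_def add_pos_pos)
  define X where "X = (\<lambda>\<omega>. lx * x t \<omega>)"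
  have XF[measurable]: "X \<in> borel_measurable (FF s)" unfolding X_def t_def by measurable
  define eS where "eS = {\<omega>\<in>space M. e t \<omega>}"
  have eSF: "eS \<in> sets (FF s)" using e_meas[rule_format, OF t1] ts by (simp add: eS_def)
  have AF: "A \<in> sets (FF s)" using Fw_F[OF js] A by auto
  have AM: "A \<in> sets M" using A by (rule sets_Fw_M)
  define G0 where "G0 = {\<omega>\<in>space M. gg \<le> \<bar>X \<omega>\<bar>}"
  define G1 where "G1 = {\<omega>\<in>space M. \<not> gg \<le> \<bar>X \<omega>\<bar> \<and> gg \<le> \<bar>X \<omega> + al\<bar>}"
  define G2 where "G2 = {\<omega>\<in>space M. \<not> gg \<le> \<bar>X \<omega>\<bar> \<and> \<not> gg \<le> \<bar>X \<omega> + al\<bar>}"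
  have G0F: "G0 \<in> sets (FF s)"
  proof -
    have "{\<omega>\<in>space (FF s). gg \<le> \<bar>X \<omega>\<bar>} \<in> sets (FF s)" by measurable
    then show ?thesis by (simp add: G0_def)
  qed
  have G1F: "G1 \<in> sets (FF s)"
  proof -
    have "{\<omega>\<in>space (FF s). \<not> gg \<le> \<bar>X \<omega>\<bar> \<and> gg \<le> \<bar>X \<omega> + al\<bar>} \<in> sets (FF s)" by measurable
    then show ?thesis by (simp add: G1_def)
  qed
  have G2F: "G2 \<in> sets (FF s)"
  proof -
    have "{\<omega>\<in>space (FF s). \<not> gg \<le> \<bar>X \<omega>\<bar> \<and> \<not> gg \<le> \<bar>X \<omega> + al\<bar>} \<in> sets (FF s)" by measurable
    then show ?thesis by (simp add: G2_def)
  qed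
  define C where "C = (\<lambda>G. A \<inter> eS \<inter> G)"
  have CF: "C G \<in> sets (FF s)" if "G \<in> sets (FF s)" for G
    unfolding C_def using AF eSF that by auto
  have FH: "sets (FF s) \<subseteq> sets (HH t)" unfolding t_def by (rule F_H)
  have FM: "B \<in> sets (FF s) \<Longrightarrow> B \<in> sets M" for B by (rule sets_F_M)
  define U where "U = (\<lambda>v. {\<omega>\<in>space M. u t \<omega> = v})"
  have UH: "U v \<in> sets (HH t)" for v
  proof -
    have "u t -` {v} \<inter> space (HH t) \<in> sets (HH t)"
      by (rule measurable_sets[OF u_H]) (simp add: borel_closed)
    moreover have "u t -` {v} \<inter> space (HH t) = U v" by (auto simp: U_def)
    ultimately show ?thesis by simp
  qed
  have HM: "B \<in> sets (HH t) \<Longrightarrow> B \<in> sets M" for B by (rule sets_H_M)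
  have unif: "measure M (C G \<inter> U v) = measure M (C G) / Mc" if G: "G \<in> sets (FF s)" and v: "v \<in> actions" for G v
  proof -
    have "C G \<inter> U v = C G \<inter> {\<omega>\<in>space M. \<eta> t \<omega> = v}"
      using e_u t1 by (auto simp: C_def U_def eS_def)
    moreover have "measure M (C G \<inter> {\<omega>\<in>space M. \<eta> t \<omega> = v}) = measure M (C G) / Mc"
      using eta_unif[rule_format, OF t1, unfolded ts, OF CF[OF G] v] by (simp add: Mc_def)
    ultimately show ?thesis by simp
  qed
  define B1 where "B1 = C G1 \<inter> U (axis i 1)"
  define B2 where "B2 = C G2 \<inter> U (axis i 1)"
  define Q0 where "Q0 = C G0 \<inter> U 0"
  define Q1 where "Q1 = B1 \<inter> {\<omega>\<in>space M. d t \<omega> $ i = 0}"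
  define Q2 where "Q2 = B2 \<inter> {\<omega>\<in>space M. d t \<omega> $ i = 1}"
  have B1H: "B1 \<in> sets (HH t)" unfolding B1_def using CF[OF G1F] FH UH by auto
  have B2H: "B2 \<in> sets (HH t)" unfolding B2_def using CF[OF G2F] FH UH by auto
  have Q0M: "Q0 \<in> sets M" unfolding Q0_def using CF[OF G0F] FH UH HM by blast
  have Q1M: "Q1 \<in> sets M" unfolding Q1_def using HM[OF B1H] by measurable
  have Q2M: "Q2 \<in> sets M" unfolding Q2_def using HM[OF B2H] by measurable
  have ui1: "\<forall>\<omega>\<in>B1. u t \<omega> $ i = 1" by (auto simp: B1_def U_def)
  have ui2: "\<forall>\<omega>\<in>B2. u t \<omega> $ i = 1" by (auto simp: B2_def U_def)
  have m0: "plow * (measure M (C G0) / Mc) \<le> measure M Q0"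
  proof -
    have "measure M Q0 = measure M (C G0) / Mc" unfolding Q0_def by (rule unif[OF G0F zero_in_actions])
    moreover have "0 \<le> measure M (C G0) / Mc" using Mc0 by simp
    moreover have "plow * (measure M (C G0) / Mc) \<le> measure M (C G0) / Mc"
      using plow_bounds \<open>0 \<le> measure M (C G0) / Mc\<close> by (rule_tac mult_left_le_one_le) auto
    ultimately show ?thesis by simp
  qed
  have m1: "plow * (measure M (C G1) / Mc) \<le> measure M Q1"
  proof -
    have "measure M B1 = measure M (C G1) / Mc" unfolding B1_def by (rule unif[OF G1F axis_in_actions])
    then show ?thesis using adh_lb[OF t1 B1H ui1, of 0] by (simp add: Q1_def)
  qed
  have m2: "plow * (measure M (C G2) / Mc) \<le> measure M Q2"
  proof -
    have "measure M B2 = measure M (C G2) / Mc" unfolding B2_def by (rule unif[OF G2F axis_in_actions])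
    then show ?thesis using adh_lb[OF t1 B2H ui2, of 1] by (simp add: Q2_def)
  qed
  have sumC: "measure M (C G0) + measure M (C G1) + measure M (C G2) = measure M (A \<inter> eS)"
  proof -
    have "measure M (C G0 \<union> C G1) = measure M (C G0) + measure M (C G1)"
      using CF[OF G0F] CF[OF G1F] FM by (intro finite_measure_Union) (auto simp: C_def G0_def G1_def)
    moreover have "measure M ((C G0 \<union> C G1) \<union> C G2) = measure M (C G0 \<union> C G1) + measure M (C G2)"
      using CF[OF G0F] CF[OF G1F] CF[OF G2F] FM by (intro finite_measure_Union) (auto simp: C_def G0_def G1_def G2_def)
    moreover have "(C G0 \<union> C G1) \<union> C G2 = A \<inter> eS"
      by (auto simp: C_def G0_def G1_def G2_def eS_def)
    ultimately show ?thesis by simp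
  qed
  have sumQ: "measure M (Q0 \<union> Q1 \<union> Q2) = measure M Q0 + measure M Q1 + measure M Q2"
  proof -
    have d01: "Q0 \<inter> Q1 = {}" by (auto simp: Q0_def Q1_def B1_def C_def G0_def G1_def)
    have d2: "(Q0 \<union> Q1) \<inter> Q2 = {}" by (auto simp: Q0_def Q1_def Q2_def B1_def B2_def C_def G0_def G1_def G2_def)
    have "measure M (Q0 \<union> Q1) = measure M Q0 + measure M Q1"
      using Q0M Q1M d01 by (rule finite_measure_Union)
    moreover have "measure M ((Q0 \<union> Q1) \<union> Q2) = measure M (Q0 \<union> Q1) + measure M Q2"
      using Q0M Q1M Q2M d2 by (intro finite_measure_Union) auto
    ultimately show ?thesis by simp
  qed
  have incl: "measure M (Q0 \<union> Q1 \<union> Q2) \<le> measure M (A \<inter> Eset lx lu ld t)"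
  proof (rule finite_measure_mono_AE)
    show "A \<inter> Eset lx lu ld t \<in> sets M" using AM by measurable
    from shapeAE[of t] show "AE \<omega> in M. \<omega> \<in> Q0 \<union> Q1 \<union> Q2 \<longrightarrow> \<omega> \<in> A \<inter> Eset lx lu ld t"
    proof eventually_elim
      case (elim \<omega>)
      show ?case
      proof
        assume h: "\<omega> \<in> Q0 \<union> Q1 \<union> Q2"
        then have sp: "\<omega> \<in> space M" and Aw: "\<omega> \<in> A"
          by (auto simp: Q0_def Q1_def Q2_def B1_def B2_def C_def U_def)
        have "gg \<le> \<bar>(lx, lu, ld) \<bullet> (x t \<omega>, u t \<omega>, d t \<omega>)\<bar>"
        proof -
          consider "\<omega> \<in> Q0" | "\<omega> \<in> Q1" | "\<omega> \<in> Q2" using h by blast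
          then show ?thesis
          proof cases
            case 1
            then have "u t \<omega> = 0" "gg \<le> \<bar>X \<omega>\<bar>" by (auto simp: Q0_def U_def C_def G0_def)
            then show ?thesis using val0[OF elim] by (simp add: X_def)
          next
            case 2
            then have "u t \<omega> = axis i 1" "d t \<omega> $ i = 0" "gg \<le> \<bar>X \<omega> + al\<bar>"
              by (auto simp: Q1_def B1_def U_def C_def G1_def)
            then show ?thesis using val1[OF elim] by (simp add: X_def al_def)
          next
            case 3
            then have "u t \<omega> = axis i 1" "d t \<omega> $ i = 1" "\<not> gg \<le> \<bar>X \<omega>\<bar>" "\<not> gg \<le> \<bar>X \<omega> + al\<bar>"
              by (auto simp: Q2_def B2_def U_def C_def G2_def)
            moreover have "gg \<le> \<bar>X \<omega>\<bar> \<or> gg \<le> \<bar>X \<omega> + al\<bar> \<or> gg \<le> \<bar>X \<omega> + al + be\<bar>"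
              by (rule three_vals[OF gg0 gsq])
            ultimately show ?thesis using val2[OF elim] by (simp add: X_def al_def be_def)
          qed
        qed
        then show "\<omega> \<in> A \<inter> Eset lx lu ld t" using sp Aw by (simp add: Eset_def)
      qed
    qed
  qed
  have "plow / Mc * measure M (A \<inter> eS) = plow * (measure M (C G0) / Mc) + plow * (measure M (C G1) / Mc) + plow * (measure M (C G2) / Mc)"
    using sumC[symmetric] Mc0 by (simp add: field_simps)
  also have "\<dots> \<le> measure M Q0 + measure M Q1 + measure M Q2" using m0 m1 m2 by linarith
  also have "\<dots> \<le> measure M (A \<inter> Eset lx lu ld t)" using sumQ incl by simp
  finally show ?thesis by (simp add: Mc_def eS_def t_def)
qed

end

context patient begin

lemma eS_sets: "t \<ge> 1 \<Longrightarrow> {\<omega>\<in>space M. e t \<omega>} \<in> sets M"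
  using e_meas sets_F_M by blast

lemma cnt:
  assumes AM: "A \<in> sets M"
  shows "real k * r * measure M A \<le> (\<Sum>i\<in>{1..k}. measure M (A \<inter> {\<omega>\<in>space M. e (j + i) \<omega>}))"
proof -
  define S where "S = (\<lambda>i. A \<inter> {\<omega>\<in>space M. e (j + i) \<omega>})"
  have SM: "S i \<in> sets M" if "i \<in> {1..k}" for i
    unfolding S_def using AM eS_sets[of "j + i"] that by auto
  have intS: "integrable M (indicator (S i) :: 'a \<Rightarrow> real)" if "i \<in> {1..k}" for i
    using SM[OF that] by (simp add: less_top[symmetric])
  have "(\<Sum>i\<in>{1..k}. measure M (S i)) = (\<Sum>i\<in>{1..k}. (\<integral>\<omega>. indicator (S i) \<omega> \<partial>M))"
    using SM by (intro sum.cong refl) (simp add: Int_absorb2 sets.sets_into_space)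
  also have "\<dots> = (\<integral>\<omega>. (\<Sum>i\<in>{1..k}. indicator (S i) \<omega>) \<partial>M)"
    by (rule Bochner_Integration.integral_sum[symmetric]) (rule intS)
  also have "\<dots> \<ge> (\<integral>\<omega>. indicator A \<omega> * of_int \<lceil>r * real k\<rceil> \<partial>M)"
  proof (rule integral_mono_AE)
    show "integrable M (\<lambda>\<omega>. indicator A \<omega> * real_of_int \<lceil>r * real k\<rceil>)"
      using AM by (simp add: less_top[symmetric])
    show "integrable M (\<lambda>\<omega>. \<Sum>i\<in>{1..k}. indicator (S i) \<omega> :: real)"
      by (rule Bochner_Integration.integrable_sum) (rule intS)
    from e_count[rule_format, of j] AE_space
    show "AE \<omega> in M. indicator A \<omega> * real_of_int \<lceil>r * real k\<rceil> \<le> (\<Sum>i\<in>{1..k}. indicator (S i) \<omega>)"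
    proof eventually_elim
      case (elim \<omega>)
      have "(\<Sum>i\<in>{1..k}. indicator (S i) \<omega> :: real) = indicator A \<omega> * (\<Sum>i\<in>{1..k}. of_bool (e (j + i) \<omega>))"
        unfolding sum_distrib_left using elim(2) by (intro sum.cong refl) (auto simp: S_def indicator_def)
      also have "(\<Sum>i\<in>{1..k}. of_bool (e (j + i) \<omega>) :: real) = (\<Sum>t\<in>{1+j..k+j}. of_bool (e t \<omega>))"
        using sum.shift_bounds_cl_nat_ivl[of "\<lambda>t. of_bool (e t \<omega>) :: real" 1 j k] by (simp add: add.commute)
      also have "\<dots> = real (card ({1+j..k+j} \<inter> {t. e t \<omega>}))" by simp
      also have "{1+j..k+j} \<inter> {t. e t \<omega>} = {t\<in>{j+1..j+k}. e t \<omega>}" by auto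
      finally have eq: "(\<Sum>i\<in>{1..k}. indicator (S i) \<omega> :: real) = indicator A \<omega> * real (card {t\<in>{j+1..j+k}. e t \<omega>})" .
      show ?case unfolding eq using elim(1) by (auto simp: indicator_def)
    qed
  qed
  also have "(\<integral>\<omega>. indicator A \<omega> * of_int \<lceil>r * real k\<rceil> \<partial>M) = of_int \<lceil>r * real k\<rceil> * measure M A"
    using AM by (simp add: mult.commute)
  finally have "of_int \<lceil>r * real k\<rceil> * measure M A \<le> (\<Sum>i\<in>{1..k}. measure M (S i))" .
  moreover have "real k * r * measure M A \<le> of_int \<lceil>r * real k\<rceil> * measure M A"
    by (intro mult_right_mono) (auto simp: mult.commute)
  ultimately show ?thesis by (simp add: S_def)
qed

definition "pm = min p1 (r * plow / real (CARD('m) + 1))"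

lemma block:
  assumes norm1: "lx\<^sup>2 + lu \<bullet> lu + ld \<bullet> ld = 1" and A: "A \<in> sets (Fw j)"
  shows "real k * pm * measure M A \<le> (\<Sum>i\<in>{1..k}. measure M (A \<inter> Eset lx lu ld (j + i)))"
proof -
  have AM: "A \<in> sets M" using A by (rule sets_Fw_M)
  have PA: "0 \<le> measure M A" by simp
  have ji: "j + i = Suc (j + i - 1)" "j \<le> j + i - 1" if "i \<in> {1..k}" for i using that by auto
  show ?thesis
  proof (cases "\<tau> \<le> \<bar>lx\<bar>")
    case True
    have "real k * pm * measure M A = (\<Sum>i\<in>{1..k}. pm * measure M A)" by simp
    also have "\<dots> \<le> (\<Sum>i\<in>{1..k}. measure M (A \<inter> Eset lx lu ld (j + i)))"
    proof (rule sum_mono)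
      fix i assume i: "i \<in> {1..k}"
      have "pm * measure M A \<le> p1 * measure M A" unfolding pm_def by (intro mult_right_mono PA) simp
      also have "\<dots> \<le> measure M (A \<inter> Eset lx lu ld (Suc (j + i - 1)))"
        by (rule case1_step[OF norm1 True ji(2)[OF i] A])
      finally show "pm * measure M A \<le> measure M (A \<inter> Eset lx lu ld (j + i))" using ji(1)[OF i] by simp
    qed
    finally show ?thesis .
  next
    case False
    then have tl: "\<bar>lx\<bar> < \<tau>" by simp
    define q where "q = plow / (real CARD('m) + 1)"
    have q0: "0 \<le> q" unfolding q_def using plow_bounds by simp
    have "real k * pm * measure M A \<le> q * (real k * r * measure M A)"
    proof -
      have "pm \<le> r * plow / real (CARD('m) + 1)" unfolding pm_def by simp
      also have "\<dots> = q * r" unfolding q_def by (simp add: ac_simps)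
      finally have "pm \<le> q * r" .
      then have "real k * measure M A * pm \<le> real k * measure M A * (q * r)" using PA by (intro mult_left_mono) auto
      then show ?thesis by (simp add: algebra_simps)
    qed
    also have "\<dots> \<le> q * (\<Sum>i\<in>{1..k}. measure M (A \<inter> {\<omega>\<in>space M. e (j + i) \<omega>}))"
      using cnt[OF AM, of j] q0 by (intro mult_left_mono) auto
    also have "\<dots> = (\<Sum>i\<in>{1..k}. q * measure M (A \<inter> {\<omega>\<in>space M. e (j + i) \<omega>}))"
      by (simp add: sum_distrib_left)
    also have "\<dots> \<le> (\<Sum>i\<in>{1..k}. measure M (A \<inter> Eset lx lu ld (j + i)))"
    proof (rule sum_mono)
      fix i assume i: "i \<in> {1..k}"
      have "q * measure M (A \<inter> {\<omega>\<in>space M. e (Suc (j + i - 1)) \<omega>}) \<le> measure M (A \<inter> Eset lx lu ld (Suc (j + i - 1)))"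
        unfolding q_def by (rule case2_step[OF norm1 tl ji(2)[OF i] A])
      then show "q * measure M (A \<inter> {\<omega>\<in>space M. e (j + i) \<omega>}) \<le> measure M (A \<inter> Eset lx lu ld (j + i))"
        using ji(1)[OF i] by simp
    qed
    finally show ?thesis .
  qed
qed

lemma bmsb: "BMSB M Fw (\<lambda>t \<omega>. (x t \<omega>, u t \<omega>, d t \<omega>)) k
      (\<lambda>v. ((1 - \<tau>\<^sup>2) / (8 * real CARD('m))) *\<^sub>R v) pm"
proof -
  define \<gamma> where "\<gamma> = (1 - \<tau>\<^sup>2) / (8 * real CARD('m))"
  have t2: "\<tau>\<^sup>2 < 1" using tau by (simp add: abs_square_less_1)
  have g0: "\<gamma> > 0" unfolding \<gamma>_def using t2 by simp
  have Wp: "prob_space W" using noise unfolding noise_law_def by blast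
  have p1b: "0 \<le> p1" "p1 \<le> 1" unfolding p1_def using prob_space.prob_le_1[OF Wp] by auto
  have pmb: "0 \<le> pm" "pm \<le> 1" unfolding pm_def using p1b plow_bounds r by auto
  have main: "AE \<omega> in M. pm \<le> 1 / real k * (\<Sum>i = 1..k. real_cond_exp M (Fw j)
        (indicator {\<omega>' \<in> space M. sqrt (l \<bullet> \<gamma> *\<^sub>R l) \<le> \<bar>l \<bullet> (x (j + i) \<omega>', u (j + i) \<omega>', d (j + i) \<omega>')\<bar>}) \<omega>)"
    if l1: "norm l = 1" for l :: "real \<times> (real ^ 'm) \<times> (real ^ 'm)" and j
  proof -
    obtain lx lu ld where l: "l = (lx, lu, ld)" by (cases l) auto
    have "l \<bullet> l = 1" using l1 by (simp add: norm_eq_1)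
    then have norm1: "lx\<^sup>2 + lu \<bullet> lu + ld \<bullet> ld = 1" by (simp add: l power2_eq_square)
    have sq: "sqrt (l \<bullet> \<gamma> *\<^sub>R l) = gg" using \<open>l \<bullet> l = 1\<close> by (simp add: gg_def \<gamma>_def)
    have seteq: "{\<omega>' \<in> space M. sqrt (l \<bullet> \<gamma> *\<^sub>R l) \<le> \<bar>l \<bullet> (x t \<omega>', u t \<omega>', d t \<omega>')\<bar>} = Eset lx lu ld t" for t
      unfolding sq by (simp add: Eset_def l)
    have "AE \<omega> in M. real k * pm \<le> (\<Sum>i\<in>{1..k}. real_cond_exp M (Fw j) (indicator (Eset lx lu ld (j + i))) \<omega>)"
    proof (rule condexp_sum_lb[OF prob_space_axioms Fw_sub])
      show "finite {1..k}" by simp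
      show "Eset lx lu ld (j + i) \<in> sets M" for i by simp
      fix A assume "A \<in> sets (Fw j)"
      then show "real k * pm * measure M A \<le> (\<Sum>i\<in>{1..k}. measure M (A \<inter> Eset lx lu ld (j + i)))"
        by (rule block[OF norm1])
    qed
    then show ?thesis
    proof eventually_elim
      case (elim \<omega>)
      have kpos: "real k > 0" using k by simp
      from elim have "pm \<le> (\<Sum>i\<in>{1..k}. real_cond_exp M (Fw j) (indicator (Eset lx lu ld (j + i))) \<omega>) / real k"
        using kpos by (simp add: field_simps)
      then show ?case unfolding seteq by simp
    qed
  qed
  show ?thesis
    unfolding BMSB_def \<gamma>_def[symmetric]
  proof (intro conjI allI impI)
    show "0 < k" using k by simp
    show "linear (\<lambda>v :: real \<times> (real ^ 'm) \<times> (real ^ 'm). \<gamma> *\<^sub>R v)"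
      by (rule linearI) (simp_all add: scaleR_add_right)
    show "v \<bullet> \<gamma> *\<^sub>R w = \<gamma> *\<^sub>R v \<bullet> w" for v w :: "real \<times> (real ^ 'm) \<times> (real ^ 'm)" by simp
    show "0 < v \<bullet> \<gamma> *\<^sub>R v" if "v \<noteq> 0" for v :: "real \<times> (real ^ 'm) \<times> (real ^ 'm)"
      using that g0 by simp
    show "0 \<le> pm" "pm \<le> 1" by (rule pmb)+
    show "subalgebra M (Fw t)" for t by (rule Fw_sub)
    show "sets (Fw s) \<subseteq> sets (Fw t)" if "s \<le> t" for s t using that by (rule Fw_mono)
    show "(\<lambda>\<omega>. (x t \<omega>, u t \<omega>, d t \<omega>)) \<in> borel_measurable (Fw t)" for t by measurable
    show "AE \<omega> in M. pm \<le> 1 / real k * (\<Sum>i = 1..k. real_cond_exp M (Fw j)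
        (indicator {\<omega>' \<in> space M. sqrt (l \<bullet> \<gamma> *\<^sub>R l) \<le> \<bar>l \<bullet> (x (j + i) \<omega>', u (j + i) \<omega>', d (j + i) \<omega>')\<bar>}) \<omega>)"
      if "norm l = 1" for l :: "real \<times> (real ^ 'm) \<times> (real ^ 'm)" and j
      using main[OF that] .
  qed
qed

end

theorem propositionA1:
  fixes M :: "'a measure" and W :: "real measure"
    and x w :: "nat \<Rightarrow> 'a \<Rightarrow> real"
    and u d :: "nat \<Rightarrow> 'a \<Rightarrow> real ^ 'm"
    and a abar bbar cbar mubar wbar sig_s sig_w r \<tau> :: real
    and b c \<mu> :: "real ^ 'm"
    and k :: nat
  assumes P: "prob_space M"
    and params: "0 < abar" "abar < 1" "0 \<le> a" "a \<le> abar"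
      "\<forall>i. \<bar>b $ i\<bar> \<le> bbar" "\<forall>i. \<bar>c $ i\<bar> \<le> cbar" "\<forall>i. \<mu> $ i \<in> {-mubar..mubar}"
      "wbar > 0"
    and noise: "noise_law W wbar sig_s sig_w"
    and meas: "\<forall>t. x t \<in> borel_measurable M" "\<forall>t. w t \<in> borel_measurable M"
      "\<forall>t. u t \<in> borel_measurable M" "\<forall>t. d t \<in> borel_measurable M"
    and init: "\<forall>\<omega>\<in>space M. x 0 \<omega> = 0 \<and> u 0 \<omega> = 0 \<and> d 0 \<omega> = 0"
    and dyn: "\<forall>t. \<forall>\<omega>\<in>space M. x (Suc t) \<omega> = a * x t \<omega> + b \<bullet> u t \<omega> + c \<bullet> d t \<omega> + w t \<omega>"
    and act: "\<forall>t. \<forall>\<omega>\<in>space M. t \<ge> 1 \<longrightarrow> u t \<omega> \<in> actions"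
    and adh_vals: "\<forall>t i. \<forall>\<omega>\<in>space M. d t \<omega> $ i \<in> {0, 1}"
    and adh: "\<forall>t i. t \<ge> 1 \<longrightarrow> (AE \<omega> in M.
        real_cond_exp M (filtH M x u d w t) (\<lambda>\<omega>'. d t \<omega>' $ i) \<omega>
          = u t \<omega> $ i * sigmoid (x t \<omega> + \<mu> $ i))"
    and noise_indep: "\<forall>t. \<forall>A\<in>sets (filtFw M x u d w t). \<forall>B\<in>sets borel.
        measure M (A \<inter> (w t -` B \<inter> space M)) = measure M A * measure W B"
    and r: "0 < r" "r \<le> 1" and k: "k \<ge> 1"
    and explore: "\<exists>(e :: nat \<Rightarrow> 'a \<Rightarrow> bool) (\<eta> :: nat \<Rightarrow> 'a \<Rightarrow> real ^ 'm).
        (\<forall>t\<ge>1. {\<omega>\<in>space M. e t \<omega>} \<in> sets (filtF M x u d w (t - 1)))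
      \<and> (\<forall>t\<ge>1. \<eta> t \<in> borel_measurable M \<and> (\<forall>\<omega>\<in>space M. \<eta> t \<omega> \<in> actions))
      \<and> (\<forall>t\<ge>1. \<forall>A\<in>sets (filtF M x u d w (t - 1)). \<forall>v\<in>actions.
            measure M (A \<inter> {\<omega>\<in>space M. \<eta> t \<omega> = v}) = measure M A / real (CARD('m) + 1))
      \<and> (\<forall>t\<ge>1. \<forall>\<omega>\<in>space M. e t \<omega> \<longrightarrow> u t \<omega> = \<eta> t \<omega>)
      \<and> (\<forall>j. AE \<omega> in M. real (card {t\<in>{j+1..j+k}. e t \<omega>}) \<ge> of_int \<lceil>r * real k\<rceil>)"
    and tau: "0 < \<tau>" "\<tau> < 1"
    and p1_pos: "measure W {y. \<bar>y\<bar> \<ge> sqrt (1 - \<tau>\<^sup>2) / \<tau> *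
        ((1 + 4 * sqrt (real CARD('m))) / (2 * sqrt (2 * real CARD('m))))} > 0"
  shows "BMSB M (filtFw M x u d w)
      (\<lambda>t \<omega>. (x t \<omega>, u t \<omega>, d t \<omega>)) k
      (\<lambda>v. ((1 - \<tau>\<^sup>2) / (8 * real CARD('m))) *\<^sub>R v)
      (min (measure W {y. \<bar>y\<bar> \<ge> sqrt (1 - \<tau>\<^sup>2) / \<tau> *
              ((1 + 4 * sqrt (real CARD('m))) / (2 * sqrt (2 * real CARD('m))))})
           (r * sigmoid (- ((bbar + cbar + wbar) / (1 - abar)) - mubar) / real (CARD('m) + 1)))"
proof -
  from explore obtain e :: "nat \<Rightarrow> 'a \<Rightarrow> bool" and \<eta> :: "nat \<Rightarrow> 'a \<Rightarrow> real ^ 'm" where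
    E1: "\<forall>t\<ge>1. {\<omega>\<in>space M. e t \<omega>} \<in> sets (filtF M x u d w (t - 1))"
    and E2: "\<forall>t\<ge>1. \<eta> t \<in> borel_measurable M \<and> (\<forall>\<omega>\<in>space M. \<eta> t \<omega> \<in> actions)"
    and E3: "\<forall>t\<ge>1. \<forall>A\<in>sets (filtF M x u d w (t - 1)). \<forall>v\<in>actions.
            measure M (A \<inter> {\<omega>\<in>space M. \<eta> t \<omega> = v}) = measure M A / real (CARD('m) + 1)"
    and E4: "\<forall>t\<ge>1. \<forall>\<omega>\<in>space M. e t \<omega> \<longrightarrow> u t \<omega> = \<eta> t \<omega>"
    and E5: "\<forall>j. AE \<omega> in M. real (card {t\<in>{j+1..j+k}. e t \<omega>}) \<ge> of_int \<lceil>r * real k\<rceil>"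
    by blast
  interpret patient M W x w u d a abar bbar cbar mubar wbar sig_s sig_w r \<tau> b c \<mu> k e \<eta>
    by (intro patient.intro patient_axioms.intro P;
        (fact params noise meas init dyn act adh_vals adh noise_indep r k tau E1 E2 E3 E4 E5)?)
  show ?thesis
    using bmsb unfolding pm_def p1_def Tthr_def plow_def Cx_def .
qed

end
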